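(* Let $X$ and $Y$ be sup-lattices. Then $(X,Y)$ is a Morita pair between some m-regular quantales (i.e. there exist m-regular quantales $A$, $B$ and pairings making $(A,B,X,Y,(-,-),[-,-])$ a Morita context) if and only if there exist surjective sup-preserving maps $p: X\otimes Y\otimes X\to X$ and $q: Y\otimes X\otimes Y\to Y$ such that, for all $x_1,x_2,x_3\in X$ and $y_1,y_2,y_3\in Y$: 1. $p(p(x_1\otimes y_1\otimes x_2)\otimes y_2\otimes x_3)=p(x_1\otimes q(y_1\otimes x_2\otimes y_2)\otimes x_3)=p(x_1\otimes y_1\otimes p(x_2\otimes y_2\otimes x_3))$; 2. $q(q(y_1\otimes x_1\otimes y_2)\otimes x_2\otimes y_3)=q(y_1\otimes p(x_1\otimes y_2\otimes x_2)\otimes y_3)=q(y_1\otimes x_1\otimes q(y_2\otimes x_2\otimes y_3))$; 3. if $p(u\otimes v\otimes x_1)=p(u\otimes v\otimes x_2)$ for all $u\in X$, $v\in Y$, then $x_1=x_2$; 4. if $p(x_1\otimes v\otimes u)=p(x_2\otimes v\otimes u)$ for all $u\in X$, $v\in Y$, then $x_1=x_2$; 5. if $q(v\otimes u\otimes y_1)=q(v\otimes u\otimes y_2)$ for all $v\in Y$, $u\in X$, then $y_1=y_2$; 6. if $q(y_1\otimes u\otimes v)=q(y_2\otimes u\otimes v)$ for all $u\in X$, $v\in Y$, then $y_1=y_2$.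
   Context: A sup-lattice is a complete lattice; sup-preserving maps preserve arbitrary joins. $\otimes$ denotes the tensor product in the category of sup-lattices (the universal sup-lattice for maps preserving arbitrary joins in each variable separately; it is join-generated by the elementary tensors). A quantale is a sup-lattice $A$ with an associative multiplication distributing over arbitrary joins on both sides. A right $A$-module is a sup-lattice $M$ with an action $M\times A\to M$ satisfying $m\cdot(a\cdot b)=(m\cdot a)\cdot b$ and preserving arbitrary joins in each variable; left modules are defined dually. A right $A$-module $M$ is essential if every element of $M$ is a join of elements $m\cdot a$, separated if ($m\cdot a=n\cdot a$ for all $a\in A$) implies $m=n$, and m-regular if it is both essential and separated; dually for left modules. An (m-regular) $A,B$-bimodule is a sup-lattice that is an (m-regular) left $A$-module and an (m-regular) right $B$-module with commuting actions. A quantale $A$ is m-regular if it is m-regular as an $A,A$-bimodule over itself. A Morita context between m-regular quantales $A$ and $B$ is a 6-tuple $(A,B,X,Y,(-,-),[-,-])$ where $X$ is an m-regular $A,B$-bimodule, $Y$ is an m-regular $B,A$-bimodule, and $(-,-):X\times Y\to A$, $[-,-]:Y\times X\to B$ are bimodule maps (preserving joins in each variable and compatible with the outer actions) satisfying $(x\cdot b,y)=(x,b\cdot y)$, $[y\cdot a,x]=[y,a\cdot x]$, $(x_1,y)\cdot x_2=x_1\cdot[y,x_2]$, $[y_1,x]\cdot y_2=y_1\cdot(x,y_2)$ for all $x,x_i\in X$, $y,y_i\in Y$, $a\in A$, $b\in B$, and such that the induced sup-preserving maps $X\otimes Y\to A$ and $Y\otimes X\to B$ are surjective. The pair $(X,Y)$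 is then called a Morita pair. *)

theory Defs
  imports Main
begin

record 'a slat =
  carrier :: "'a set"
  le :: "'a \<Rightarrow> 'a \<Rightarrow> bool"

definition is_lub :: "('a, 'e) slat_scheme \<Rightarrow> 'a set \<Rightarrow> 'a \<Rightarrow> bool" where
  "is_lub L S s \<longleftrightarrow> s \<in> carrier L \<and> (\<forall>x\<in>S. le L x s) \<and>
     (\<forall>z\<in>carrier L. (\<forall>x\<in>S. le L x z) \<longrightarrow> le L s z)"

definition lub :: "('a, 'e) slat_scheme \<Rightarrow> 'a set \<Rightarrow> 'a" where
  "lub L S = (THE s. is_lub L S s)"

definition sup_lattice :: "('a, 'e) slat_scheme \<Rightarrow> bool" where
  "sup_lattice L \<longleftrightarrow>
     (\<forall>x\<in>carrier L. le L x x) \<and>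
     (\<forall>x\<in>carrier L. \<forall>y\<in>carrier L. le L x y \<longrightarrow> le L y x \<longrightarrow> x = y) \<and>
     (\<forall>x\<in>carrier L. \<forall>y\<in>carrier L. \<forall>z\<in>carrier L. le L x y \<longrightarrow> le L y z \<longrightarrow> le L x z) \<and>
     (\<forall>S. S \<subseteq> carrier L \<longrightarrow> (\<exists>s. is_lub L S s))"

definition sup_preserving ::
  "('a, 'e) slat_scheme \<Rightarrow> ('b, 'f) slat_scheme \<Rightarrow> ('a \<Rightarrow> 'b) \<Rightarrow> bool" where
  "sup_preserving L M f \<longleftrightarrow>
     (\<forall>x\<in>carrier L. f x \<in> carrier M) \<and>
     (\<forall>S. S \<subseteq> carrier L \<longrightarrow> f (lub L S) = lub M (f ` S))"

definition tlat :: "'a::complete_lattice slat" where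
  "tlat = \<lparr>carrier = UNIV, le = (\<le>)\<rparr>"

text \<open>Binary tensor product X \<otimes> Y: the down-closed subsets of X \<times> Y that are closed
  under arbitrary joins in each variable separately, ordered by inclusion.\<close>
definition bi_ideal :: "('a::complete_lattice \<times> 'b::complete_lattice) set \<Rightarrow> bool" where
  "bi_ideal D \<longleftrightarrow>
     (\<forall>a b a' b'. (a, b) \<in> D \<longrightarrow> a' \<le> a \<longrightarrow> b' \<le> b \<longrightarrow> (a', b') \<in> D) \<and>
     (\<forall>S b. (\<forall>a\<in>S. (a, b) \<in> D) \<longrightarrow> (Sup S, b) \<in> D) \<and>
     (\<forall>a T. (\<forall>b\<in>T. (a, b) \<in> D) \<longrightarrow> (a, Sup T) \<in> D)"

definition tensor2 :: "('a::complete_lattice \<times> 'b::complete_lattice) set slat" where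
  "tensor2 = \<lparr>carrier = {D. bi_ideal D}, le = (\<subseteq>)\<rparr>"

definition etensor2 :: "'a::complete_lattice \<Rightarrow> 'b::complete_lattice \<Rightarrow> ('a \<times> 'b) set" where
  "etensor2 x y = {(a, b). (a \<le> x \<and> b \<le> y) \<or> a = bot \<or> b = bot}"

definition tri_ideal ::
  "('a::complete_lattice \<times> 'b::complete_lattice \<times> 'c::complete_lattice) set \<Rightarrow> bool" where
  "tri_ideal D \<longleftrightarrow>
     (\<forall>a b c a' b' c'. (a, b, c) \<in> D \<longrightarrow> a' \<le> a \<longrightarrow> b' \<le> b \<longrightarrow> c' \<le> c \<longrightarrow> (a', b', c') \<in> D) \<and>
     (\<forall>S b c. (\<forall>a\<in>S. (a, b, c) \<in> D) \<longrightarrow> (Sup S, b, c) \<in> D) \<and>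
     (\<forall>a T c. (\<forall>b\<in>T. (a, b, c) \<in> D) \<longrightarrow> (a, Sup T, c) \<in> D) \<and>
     (\<forall>a b U. (\<forall>c\<in>U. (a, b, c) \<in> D) \<longrightarrow> (a, b, Sup U) \<in> D)"

definition tensor3 ::
  "('a::complete_lattice \<times> 'b::complete_lattice \<times> 'c::complete_lattice) set slat" where
  "tensor3 = \<lparr>carrier = {D. tri_ideal D}, le = (\<subseteq>)\<rparr>"

definition etensor3 ::
  "'a::complete_lattice \<Rightarrow> 'b::complete_lattice \<Rightarrow> 'c::complete_lattice \<Rightarrow> ('a \<times> 'b \<times> 'c) set" where
  "etensor3 x y z = {(a, b, c). (a \<le> x \<and> b \<le> y \<and> c \<le> z) \<or> a = bot \<or> b = bot \<or> c = bot}"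

record 'a quantale = "'a slat" +
  mult :: "'a \<Rightarrow> 'a \<Rightarrow> 'a"

definition quantale :: "'a quantale \<Rightarrow> bool" where
  "quantale A \<longleftrightarrow> sup_lattice A \<and>
     (\<forall>a\<in>carrier A. \<forall>b\<in>carrier A. mult A a b \<in> carrier A) \<and>
     (\<forall>a\<in>carrier A. \<forall>b\<in>carrier A. \<forall>c\<in>carrier A.
        mult A (mult A a b) c = mult A a (mult A b c)) \<and>
     (\<forall>a\<in>carrier A. \<forall>S. S \<subseteq> carrier A \<longrightarrow>
        mult A a (lub A S) = lub A (mult A a ` S)) \<and>
     (\<forall>a\<in>carrier A. \<forall>S. S \<subseteq> carrier A \<longrightarrow>
        mult A (lub A S) a = lub A ((\<lambda>s. mult A s a) ` S))"

definition right_module ::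
  "'a quantale \<Rightarrow> ('m, 'e) slat_scheme \<Rightarrow> ('m \<Rightarrow> 'a \<Rightarrow> 'm) \<Rightarrow> bool" where
  "right_module A M act \<longleftrightarrow> quantale A \<and> sup_lattice M \<and>
     (\<forall>m\<in>carrier M. \<forall>a\<in>carrier A. act m a \<in> carrier M) \<and>
     (\<forall>m\<in>carrier M. \<forall>a\<in>carrier A. \<forall>b\<in>carrier A. act m (mult A a b) = act (act m a) b) \<and>
     (\<forall>a\<in>carrier A. \<forall>S. S \<subseteq> carrier M \<longrightarrow> act (lub M S) a = lub M ((\<lambda>m. act m a) ` S)) \<and>
     (\<forall>m\<in>carrier M. \<forall>S. S \<subseteq> carrier A \<longrightarrow> act m (lub A S) = lub M (act m ` S))"

definition left_module ::
  "'a quantale \<Rightarrow> ('m, 'e) slat_scheme \<Rightarrow> ('a \<Rightarrow> 'm \<Rightarrow> 'm) \<Rightarrow> bool" where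
  "left_module A M act \<longleftrightarrow> quantale A \<and> sup_lattice M \<and>
     (\<forall>m\<in>carrier M. \<forall>a\<in>carrier A. act a m \<in> carrier M) \<and>
     (\<forall>m\<in>carrier M. \<forall>a\<in>carrier A. \<forall>b\<in>carrier A. act (mult A a b) m = act a (act b m)) \<and>
     (\<forall>a\<in>carrier A. \<forall>S. S \<subseteq> carrier M \<longrightarrow> act a (lub M S) = lub M (act a ` S)) \<and>
     (\<forall>m\<in>carrier M. \<forall>S. S \<subseteq> carrier A \<longrightarrow> act (lub A S) m = lub M ((\<lambda>a. act a m) ` S))"

definition right_mregular ::
  "'a quantale \<Rightarrow> ('m, 'e) slat_scheme \<Rightarrow> ('m \<Rightarrow> 'a \<Rightarrow> 'm) \<Rightarrow> bool" where
  "right_mregular A M act \<longleftrightarrow> right_module A M act \<and>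
     \<comment> \<open>essential\<close>
     (\<forall>m\<in>carrier M. \<exists>S. S \<subseteq> {act n a | n a. n \<in> carrier M \<and> a \<in> carrier A} \<and> m = lub M S) \<and>
     \<comment> \<open>separated\<close>
     (\<forall>m\<in>carrier M. \<forall>n\<in>carrier M. (\<forall>a\<in>carrier A. act m a = act n a) \<longrightarrow> m = n)"

definition left_mregular ::
  "'a quantale \<Rightarrow> ('m, 'e) slat_scheme \<Rightarrow> ('a \<Rightarrow> 'm \<Rightarrow> 'm) \<Rightarrow> bool" where
  "left_mregular A M act \<longleftrightarrow> left_module A M act \<and>
     (\<forall>m\<in>carrier M. \<exists>S. S \<subseteq> {act a n | a n. a \<in> carrier A \<and> n \<in> carrier M} \<and> m = lub M S) \<and>
     (\<forall>m\<in>carrier M. \<forall>n\<in>carrier M. (\<forall>a\<in>carrier A. act a m = act a n) \<longrightarrow> m = n)"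

definition mregular_bimodule ::
  "'a quantale \<Rightarrow> 'b quantale \<Rightarrow> ('m, 'e) slat_scheme \<Rightarrow>
   ('a \<Rightarrow> 'm \<Rightarrow> 'm) \<Rightarrow> ('m \<Rightarrow> 'b \<Rightarrow> 'm) \<Rightarrow> bool" where
  "mregular_bimodule A B M l r \<longleftrightarrow> left_mregular A M l \<and> right_mregular B M r \<and>
     (\<forall>a\<in>carrier A. \<forall>m\<in>carrier M. \<forall>b\<in>carrier B. r (l a m) b = l a (r m b))"

definition mregular_quantale :: "'a quantale \<Rightarrow> bool" where
  "mregular_quantale A \<longleftrightarrow> quantale A \<and> mregular_bimodule A A A (mult A) (mult A)"

text \<open>Morita context (A, B, X, Y, (-,-), [-,-]) with X an A,B-bimodule (actions lX, rX),
  Y a B,A-bimodule (actions lY, rY), pairings pr = (-,-) and br = [-,-].\<close>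
definition morita_context ::
  "'a quantale \<Rightarrow> 'b quantale \<Rightarrow>
   ('a \<Rightarrow> 'x::complete_lattice \<Rightarrow> 'x) \<Rightarrow> ('x \<Rightarrow> 'b \<Rightarrow> 'x) \<Rightarrow>
   ('b \<Rightarrow> 'y::complete_lattice \<Rightarrow> 'y) \<Rightarrow> ('y \<Rightarrow> 'a \<Rightarrow> 'y) \<Rightarrow>
   ('x \<Rightarrow> 'y \<Rightarrow> 'a) \<Rightarrow> ('y \<Rightarrow> 'x \<Rightarrow> 'b) \<Rightarrow> bool" where
  "morita_context A B lX rX lY rY pr br \<longleftrightarrow>
     mregular_quantale A \<and> mregular_quantale B \<and>
     mregular_bimodule A B (tlat :: 'x slat) lX rX \<and>
     mregular_bimodule B A (tlat :: 'y slat) lY rY \<and>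
     \<comment> \<open>the pairings take values in the quantales\<close>
     (\<forall>x y. pr x y \<in> carrier A) \<and> (\<forall>y x. br y x \<in> carrier B) \<and>
     \<comment> \<open>join preservation in each variable\<close>
     (\<forall>S y. pr (Sup S) y = lub A ((\<lambda>x. pr x y) ` S)) \<and>
     (\<forall>x T. pr x (Sup T) = lub A (pr x ` T)) \<and>
     (\<forall>T x. br (Sup T) x = lub B ((\<lambda>y. br y x) ` T)) \<and>
     (\<forall>y S. br y (Sup S) = lub B (br y ` S)) \<and>
     \<comment> \<open>compatibility with the outer actions\<close>
     (\<forall>a\<in>carrier A. \<forall>x y. pr (lX a x) y = mult A a (pr x y)) \<and>
     (\<forall>a\<in>carrier A. \<forall>x y. pr x (rY y a) = mult A (pr x y) a) \<and>
     (\<forall>b\<in>carrier B. \<forall>y x. br (lY b y) x = mult B b (br y x)) \<and>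
     (\<forall>b\<in>carrier B. \<forall>y x. br y (rX x b) = mult B (br y x) b) \<and>
     \<comment> \<open>balancing and associativity conditions\<close>
     (\<forall>x y. \<forall>b\<in>carrier B. pr (rX x b) y = pr x (lY b y)) \<and>
     (\<forall>y x. \<forall>a\<in>carrier A. br (rY y a) x = br y (lX a x)) \<and>
     (\<forall>x1 y x2. lX (pr x1 y) x2 = rX x1 (br y x2)) \<and>
     (\<forall>y1 x y2. lY (br y1 x) y2 = rY y1 (pr x y2)) \<and>
     \<comment> \<open>the induced maps X \<otimes> Y \<rightarrow> A and Y \<otimes> X \<rightarrow> B exist and are surjective\<close>
     (\<exists>f. sup_preserving (tensor2 :: ('x \<times> 'y) set slat) A f \<and>
          (\<forall>x y. f (etensor2 x y) = pr x y) \<and> f ` carrier (tensor2 :: ('x \<times> 'y) set slat) = carrier A) \<and>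
     (\<exists>g. sup_preserving (tensor2 :: ('y \<times> 'x) set slat) B g \<and>
          (\<forall>y x. g (etensor2 y x) = br y x) \<and> g ` carrier (tensor2 :: ('y \<times> 'x) set slat) = carrier B)"

end

theory Submission
  imports Defs
begin

lemma lub_eqI:
  assumes "is_lub L S s"
    and "\<And>x y. x \<in> carrier L \<Longrightarrow> y \<in> carrier L \<Longrightarrow> le L x y \<Longrightarrow> le L y x \<Longrightarrow> x = y"
  shows "lub L S = s"
  unfolding lub_def
proof (rule the_equality)
  show "is_lub L S s" by fact
  fix s' assume "is_lub L S s'"
  then show "s' = s" using assms unfolding is_lub_def by blast
qed

lemma lub_tlat: "lub (tlat :: 'a::complete_lattice slat) S = Sup S"
  by (rule lub_eqI) (auto simp: is_lub_def tlat_def intro: Sup_upper Sup_least antisym)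

lemma sup_lattice_tlat: "sup_lattice (tlat :: 'a::complete_lattice slat)"
  unfolding sup_lattice_def
  by (auto simp: is_lub_def tlat_def intro!: exI[of _ "Sup _"] Sup_upper Sup_least antisym)

lemma carrier_tlat[simp]: "carrier tlat = UNIV" and le_tlat[simp]: "le tlat = (\<le>)"
  by (auto simp: tlat_def)

lemma SUP_times:
  fixes f :: "'a \<times> 'b \<Rightarrow> 'c::complete_lattice"
  shows "(SUP z\<in>S \<times> T. f z) = (SUP s\<in>S. SUP t\<in>T. f (s, t))"
  by (rule antisym) (auto intro!: SUP_least SUP_upper2)

subsection \<open>Tensor products\<close>

lemma tri_ideal_D1: "tri_ideal D \<Longrightarrow> (a,b,c)\<in>D \<Longrightarrow> a' \<le> a \<Longrightarrow> b' \<le> b \<Longrightarrow> c' \<le> c \<Longrightarrow> (a',b',c') \<in> D"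
  unfolding tri_ideal_def apply (drule conjunct1)
  by (drule spec[of _ a], drule spec[of _ b], drule spec[of _ c], drule spec[of _ a'], drule spec[of _ b'], drule spec[of _ c']) simp
lemma tri_ideal_D2: "tri_ideal D \<Longrightarrow> (\<And>a. a \<in> S \<Longrightarrow> (a,b,c)\<in>D) \<Longrightarrow> (Sup S,b,c) \<in> D"
  unfolding tri_ideal_def apply (drule conjunct2, drule conjunct1)
  by (drule spec[of _ S], drule spec[of _ b], drule spec[of _ c]) simp
lemma tri_ideal_D3: "tri_ideal D \<Longrightarrow> (\<And>b. b \<in> T \<Longrightarrow> (a,b,c)\<in>D) \<Longrightarrow> (a,Sup T,c) \<in> D"
  unfolding tri_ideal_def apply (drule conjunct2, drule conjunct2, drule conjunct1)
  by (drule spec[of _ a], drule spec[of _ T], drule spec[of _ c]) simp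
lemma tri_ideal_D4: "tri_ideal D \<Longrightarrow> (\<And>c. c \<in> U \<Longrightarrow> (a,b,c)\<in>D) \<Longrightarrow> (a,b,Sup U) \<in> D"
  unfolding tri_ideal_def apply (drule conjunct2, drule conjunct2, drule conjunct2)
  by (drule spec[of _ a], drule spec[of _ b], drule spec[of _ U]) simp
lemma tri_idealI:
  assumes "\<And>a b c a' b' c'. (a,b,c)\<in>D \<Longrightarrow> a' \<le> a \<Longrightarrow> b' \<le> b \<Longrightarrow> c' \<le> c \<Longrightarrow> (a',b',c') \<in> D"
   "\<And>S b c. (\<And>a. a \<in> S \<Longrightarrow> (a,b,c)\<in>D) \<Longrightarrow> (Sup S,b,c) \<in> D"
   "\<And>T a c. (\<And>b. b \<in> T \<Longrightarrow> (a,b,c)\<in>D) \<Longrightarrow> (a,Sup T,c) \<in> D"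
   "\<And>U a b. (\<And>c. c \<in> U \<Longrightarrow> (a,b,c)\<in>D) \<Longrightarrow> (a,b,Sup U) \<in> D"
  shows "tri_ideal D"
  unfolding tri_ideal_def
  apply (intro conjI allI impI)
  subgoal by (erule assms(1)) 
  subgoal by (rule assms(2)) simp
  subgoal by (rule assms(3)) simp
  subgoal by (rule assms(4)) simp
  done
lemma bi_ideal_D1: "bi_ideal D \<Longrightarrow> (a,b)\<in>D \<Longrightarrow> a' \<le> a \<Longrightarrow> b' \<le> b \<Longrightarrow> (a',b') \<in> D"
  unfolding bi_ideal_def apply (drule conjunct1)
  by (drule spec[of _ a], drule spec[of _ b], drule spec[of _ a'], drule spec[of _ b']) simp
lemma bi_ideal_D2: "bi_ideal D \<Longrightarrow> (\<And>a. a \<in> S \<Longrightarrow> (a,b)\<in>D) \<Longrightarrow> (Sup S,b) \<in> D"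
  unfolding bi_ideal_def apply (drule conjunct2, drule conjunct1)
  by (drule spec[of _ S], drule spec[of _ b]) simp
lemma bi_ideal_D3: "bi_ideal D \<Longrightarrow> (\<And>b. b \<in> T \<Longrightarrow> (a,b)\<in>D) \<Longrightarrow> (a,Sup T) \<in> D"
  unfolding bi_ideal_def apply (drule conjunct2, drule conjunct2)
  by (drule spec[of _ a], drule spec[of _ T]) simp
lemma bi_idealI:
  assumes "\<And>a b a' b'. (a,b)\<in>D \<Longrightarrow> a' \<le> a \<Longrightarrow> b' \<le> b \<Longrightarrow> (a',b') \<in> D"
   "\<And>S b. (\<And>a. a \<in> S \<Longrightarrow> (a,b)\<in>D) \<Longrightarrow> (Sup S,b) \<in> D"
   "\<And>T a. (\<And>b. b \<in> T \<Longrightarrow> (a,b)\<in>D) \<Longrightarrow> (a,Sup T) \<in> D"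
  shows "bi_ideal D"
  unfolding bi_ideal_def
  apply (intro conjI allI impI)
  subgoal by (erule assms(1))
  subgoal by (rule assms(2)) simp
  subgoal by (rule assms(3)) simp
  done

lemma tri_ideal_Inter:
  assumes "\<And>E. E \<in> F \<Longrightarrow> tri_ideal E" shows "tri_ideal (\<Inter>F)"
proof (rule tri_idealI)
  fix a b c a' b' c' assume "(a,b,c) \<in> \<Inter>F" "a' \<le> a" "b' \<le> b" "c' \<le> c"
  then show "(a',b',c') \<in> \<Inter>F" by (auto intro: tri_ideal_D1[OF assms])
next
  fix S b c assume "\<And>a. a \<in> S \<Longrightarrow> (a,b,c) \<in> \<Inter>F"
  then show "(Sup S,b,c) \<in> \<Inter>F" by (auto intro!: tri_ideal_D2[OF assms])
next
  fix T a c assume "\<And>b. b \<in> T \<Longrightarrow> (a,b,c) \<in> \<Inter>F"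
  then show "(a,Sup T,c) \<in> \<Inter>F" by (auto intro!: tri_ideal_D3[OF assms])
next
  fix U a b assume "\<And>c. c \<in> U \<Longrightarrow> (a,b,c) \<in> \<Inter>F"
  then show "(a,b,Sup U) \<in> \<Inter>F" by (auto intro!: tri_ideal_D4[OF assms])
qed

lemma bi_ideal_Inter:
  assumes "\<And>E. E \<in> F \<Longrightarrow> bi_ideal E" shows "bi_ideal (\<Inter>F)"
proof (rule bi_idealI)
  fix a b a' b' assume "(a,b) \<in> \<Inter>F" "a' \<le> a" "b' \<le> b"
  then show "(a',b') \<in> \<Inter>F" by (auto intro: bi_ideal_D1[OF assms])
next
  fix S b assume "\<And>a. a \<in> S \<Longrightarrow> (a,b) \<in> \<Inter>F"
  then show "(Sup S,b) \<in> \<Inter>F" by (auto intro!: bi_ideal_D2[OF assms])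
next
  fix T a assume "\<And>b. b \<in> T \<Longrightarrow> (a,b) \<in> \<Inter>F"
  then show "(a,Sup T) \<in> \<Inter>F" by (auto intro!: bi_ideal_D3[OF assms])
qed

lemma lub_tensor3: "lub tensor3 Ds = \<Inter>{E. tri_ideal E \<and> \<Union>Ds \<subseteq> E}"
  by (rule lub_eqI) (auto simp: is_lub_def tensor3_def intro!: tri_ideal_Inter)

lemma lub_tensor2: "lub tensor2 Ds = \<Inter>{E. bi_ideal E \<and> \<Union>Ds \<subseteq> E}"
  by (rule lub_eqI) (auto simp: is_lub_def tensor2_def intro!: bi_ideal_Inter)

lemma tri_ideal_bot:
  assumes "tri_ideal E"
  shows "(bot, b, c) \<in> E" "(a, bot, c) \<in> E" "(a, b, bot) \<in> E"
  using tri_ideal_D2[OF assms, of "{}"] tri_ideal_D3[OF assms, of "{}"] tri_ideal_D4[OF assms, of "{}"]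
  by simp_all

lemma bi_ideal_bot:
  assumes "bi_ideal E"
  shows "(bot, b) \<in> E" "(a, bot) \<in> E"
  using bi_ideal_D2[OF assms, of "{}"] bi_ideal_D3[OF assms, of "{}"]
  by simp_all

lemma Sup_le_or_bot:
  fixes x :: "'a::complete_lattice"
  assumes "\<forall>a\<in>S. a \<le> x \<and> P \<or> a = bot"
  shows "(Sup S \<le> x \<and> P) \<or> Sup S = bot"
proof (cases "\<exists>a\<in>S. a \<noteq> bot")
  case True
  then have P using assms by blast
  moreover have "Sup S \<le> x" by (rule Sup_least) (use assms in auto)
  ultimately show ?thesis by blast
next
  case False
  then have "Sup S = bot" by (auto simp: Sup_bot_conv)
  then show ?thesis by blast
qed

lemma Sup_le_or_bot2:
  fixes x :: "'a::complete_lattice"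
  assumes "\<forall>a\<in>S. a \<le> x \<and> Q \<or> a = bot \<or> R"
  shows "(Sup S \<le> x \<and> Q) \<or> Sup S = bot \<or> R"
proof (cases R)
  case False
  then have "\<forall>a\<in>S. a \<le> x \<and> Q \<or> a = bot" using assms by blast
  from Sup_le_or_bot[OF this] show ?thesis by blast
qed simp

lemma tri_ideal_e3: "tri_ideal (etensor3 x y z)"
proof (rule tri_idealI)
  fix a b c a' b' c'
  assume "(a, b, c) \<in> etensor3 x y z" "a' \<le> a" "b' \<le> b" "c' \<le> c"
  then show "(a', b', c') \<in> etensor3 x y z"
    unfolding etensor3_def by (auto intro: order_trans simp: bot_unique)
next
  fix S b c assume "\<And>a. a \<in> S \<Longrightarrow> (a, b, c) \<in> etensor3 x y z"
  then have "\<forall>a\<in>S. a \<le> x \<and> (b \<le> y \<and> c \<le> z) \<or> a = bot \<or> (b = bot \<or> c = bot)"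
    unfolding etensor3_def by blast
  from Sup_le_or_bot2[OF this] show "(Sup S, b, c) \<in> etensor3 x y z"
    unfolding etensor3_def by blast
next
  fix T a c assume "\<And>b. b \<in> T \<Longrightarrow> (a, b, c) \<in> etensor3 x y z"
  then have "\<forall>b\<in>T. b \<le> y \<and> (a \<le> x \<and> c \<le> z) \<or> b = bot \<or> (a = bot \<or> c = bot)"
    unfolding etensor3_def by blast
  from Sup_le_or_bot2[OF this] show "(a, Sup T, c) \<in> etensor3 x y z"
    unfolding etensor3_def by blast
next
  fix U a b assume "\<And>c. c \<in> U \<Longrightarrow> (a, b, c) \<in> etensor3 x y z"
  then have "\<forall>c\<in>U. c \<le> z \<and> (a \<le> x \<and> b \<le> y) \<or> c = bot \<or> (a = bot \<or> b = bot)"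
    unfolding etensor3_def by blast
  from Sup_le_or_bot2[OF this] show "(a, b, Sup U) \<in> etensor3 x y z"
    unfolding etensor3_def by blast
qed

lemma bi_ideal_e2: "bi_ideal (etensor2 x y)"
proof (rule bi_idealI)
  fix a b a' b'
  assume "(a, b) \<in> etensor2 x y" "a' \<le> a" "b' \<le> b"
  then show "(a', b') \<in> etensor2 x y"
    unfolding etensor2_def by (auto intro: order_trans simp: bot_unique)
next
  fix S b assume "\<And>a. a \<in> S \<Longrightarrow> (a, b) \<in> etensor2 x y"
  then have "\<forall>a\<in>S. a \<le> x \<and> (b \<le> y) \<or> a = bot \<or> (b = bot)"
    unfolding etensor2_def by blast
  from Sup_le_or_bot2[OF this] show "(Sup S, b) \<in> etensor2 x y"
    unfolding etensor2_def by blast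
next
  fix T a assume "\<And>b. b \<in> T \<Longrightarrow> (a, b) \<in> etensor2 x y"
  then have "\<forall>b\<in>T. b \<le> y \<and> (a \<le> x) \<or> b = bot \<or> (a = bot)"
    unfolding etensor2_def by blast
  from Sup_le_or_bot2[OF this] show "(a, Sup T) \<in> etensor2 x y"
    unfolding etensor2_def by blast
qed

lemma e3_sub_tri_ideal:
  assumes "tri_ideal E" "(x, y, z) \<in> E"
  shows "etensor3 x y z \<subseteq> E"
proof
  fix t assume "t \<in> etensor3 x y z"
  then obtain a b c where t: "t = (a, b, c)" and
    h: "(a \<le> x \<and> b \<le> y \<and> c \<le> z) \<or> a = bot \<or> b = bot \<or> c = bot"
    unfolding etensor3_def by (cases t) auto
  note dc = tri_ideal_D1[OF assms(1)]
  from h consider "a \<le> x" "b \<le> y" "c \<le> z" | "a = bot" | "b = bot" | "c = bot" by blast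
  then have "(a, b, c) \<in> E"
  proof cases
    case 1 then show ?thesis by (rule dc[OF assms(2)])
  next
    case 2 then show ?thesis using tri_ideal_bot(1)[OF assms(1)] by simp
  next
    case 3 then show ?thesis using tri_ideal_bot(2)[OF assms(1)] by simp
  next
    case 4 then show ?thesis using tri_ideal_bot(3)[OF assms(1)] by simp
  qed
  then show "t \<in> E" using t by simp
qed

lemma e2_sub_bi_ideal:
  assumes "bi_ideal E" "(x, y) \<in> E"
  shows "etensor2 x y \<subseteq> E"
proof
  fix t assume "t \<in> etensor2 x y"
  then obtain a b where t: "t = (a, b)" and
    h: "(a \<le> x \<and> b \<le> y) \<or> a = bot \<or> b = bot"
    unfolding etensor2_def by (cases t) auto
  note dc = bi_ideal_D1[OF assms(1)]
  from h consider "a \<le> x" "b \<le> y" | "a = bot" | "b = bot" by blast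
  then have "(a, b) \<in> E"
  proof cases
    case 1 then show ?thesis by (rule dc[OF assms(2)])
  next
    case 2 then show ?thesis using bi_ideal_bot(1)[OF assms(1)] by simp
  next
    case 3 then show ?thesis using bi_ideal_bot(2)[OF assms(1)] by simp
  qed
  then show "t \<in> E" using t by simp
qed

lemma tri_decomp:
  assumes "tri_ideal D"
  shows "lub tensor3 ((\<lambda>(a, b, c). etensor3 a b c) ` D) = D"
proof -
  have U: "\<Union>((\<lambda>(a, b, c). etensor3 a b c) ` D) = D"
  proof
    show "\<Union>((\<lambda>(a, b, c). etensor3 a b c) ` D) \<subseteq> D"
    proof (rule UN_least)
      fix t assume "t \<in> D"
      obtain a b c where t: "t = (a, b, c)" by (cases t) auto
      show "(\<lambda>(a, b, c). etensor3 a b c) t \<subseteq> D"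
        using e3_sub_tri_ideal[OF assms, of a b c] \<open>t \<in> D\<close> t by simp
    qed
    show "D \<subseteq> \<Union>((\<lambda>(a, b, c). etensor3 a b c) ` D)"
    proof
      fix t assume "t \<in> D"
      obtain a b c where t: "t = (a, b, c)" by (cases t) auto
      have "t \<in> etensor3 a b c" unfolding t etensor3_def by simp
      then show "t \<in> \<Union>((\<lambda>(a, b, c). etensor3 a b c) ` D)"
        using \<open>t \<in> D\<close> unfolding t by (intro UN_I[of "(a, b, c)"]) auto
    qed
  qed
  show ?thesis unfolding lub_tensor3 U
  proof (rule antisym)
    show "\<Inter>{E. tri_ideal E \<and> D \<subseteq> E} \<subseteq> D" by (rule Inter_lower) (simp add: assms)
    show "D \<subseteq> \<Inter>{E. tri_ideal E \<and> D \<subseteq> E}" by (rule Inter_greatest) simp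
  qed
qed

lemma bi_decomp:
  assumes "bi_ideal D"
  shows "lub tensor2 ((\<lambda>(a, b). etensor2 a b) ` D) = D"
proof -
  have U: "\<Union>((\<lambda>(a, b). etensor2 a b) ` D) = D"
  proof
    show "\<Union>((\<lambda>(a, b). etensor2 a b) ` D) \<subseteq> D"
    proof (rule UN_least)
      fix t assume "t \<in> D"
      obtain a b where t: "t = (a, b)" by (cases t) auto
      show "(\<lambda>(a, b). etensor2 a b) t \<subseteq> D"
        using e2_sub_bi_ideal[OF assms, of a b] \<open>t \<in> D\<close> t by simp
    qed
    show "D \<subseteq> \<Union>((\<lambda>(a, b). etensor2 a b) ` D)"
    proof
      fix t assume "t \<in> D"
      obtain a b where t: "t = (a, b)" by (cases t) auto
      have "t \<in> etensor2 a b" unfolding t etensor2_def by simp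
      then show "t \<in> \<Union>((\<lambda>(a, b). etensor2 a b) ` D)"
        using \<open>t \<in> D\<close> unfolding t by (intro UN_I[of "(a, b)"]) auto
    qed
  qed
  show ?thesis unfolding lub_tensor2 U
  proof (rule antisym)
    show "\<Inter>{E. bi_ideal E \<and> D \<subseteq> E} \<subseteq> D" by (rule Inter_lower) (simp add: assms)
    show "D \<subseteq> \<Inter>{E. bi_ideal E \<and> D \<subseteq> E}" by (rule Inter_greatest) simp
  qed
qed

lemma e3_in_tensor3: "etensor3 x y z \<in> carrier tensor3"
  by (simp add: tensor3_def tri_ideal_e3)

lemma e2_in_tensor2: "etensor2 x y \<in> carrier tensor2"
  by (simp add: tensor2_def bi_ideal_e2)


lemma carrier_tensor3: "carrier tensor3 = {D. tri_ideal D}"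
  by (simp add: tensor3_def)
lemma carrier_tensor2: "carrier tensor2 = {D. bi_ideal D}"
  by (simp add: tensor2_def)

lemma e3_mono: "x \<le> x' \<Longrightarrow> y \<le> y' \<Longrightarrow> z \<le> z' \<Longrightarrow> etensor3 x y z \<subseteq> etensor3 x' y' z'"
  unfolding etensor3_def by (auto intro: order_trans)

lemma tri_ideal_lub: "tri_ideal (lub tensor3 Ds)"
  unfolding lub_tensor3 by (rule tri_ideal_Inter) simp

lemma lub_tensor3_upper: "D \<in> Ds \<Longrightarrow> D \<subseteq> lub tensor3 Ds"
  unfolding lub_tensor3 by (rule Inter_greatest) auto

lemma lub_tensor3_least: "tri_ideal E \<Longrightarrow> (\<And>D. D \<in> Ds \<Longrightarrow> D \<subseteq> E) \<Longrightarrow> lub tensor3 Ds \<subseteq> E"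
  unfolding lub_tensor3 by (rule Inter_lower) auto

lemma e3_Sup_gen:
  assumes "\<And>w. w \<in> W \<Longrightarrow> fx w \<le> x \<and> fy w \<le> y \<and> fz w \<le> z"
    and "\<And>E. tri_ideal E \<Longrightarrow> (\<And>w. w \<in> W \<Longrightarrow> (fx w, fy w, fz w) \<in> E) \<Longrightarrow> (x, y, z) \<in> E"
  shows "etensor3 x y z = lub tensor3 ((\<lambda>w. etensor3 (fx w) (fy w) (fz w)) ` W)"
proof (rule antisym)
  show "lub tensor3 ((\<lambda>w. etensor3 (fx w) (fy w) (fz w)) ` W) \<subseteq> etensor3 x y z"
    by (rule lub_tensor3_least[OF tri_ideal_e3]) (use assms(1) e3_mono in blast)
  have T: "tri_ideal (lub tensor3 ((\<lambda>w. etensor3 (fx w) (fy w) (fz w)) ` W))"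
    by (rule tri_ideal_lub)
  have "(x, y, z) \<in> lub tensor3 ((\<lambda>w. etensor3 (fx w) (fy w) (fz w)) ` W)"
  proof (rule assms(2)[OF T])
    fix w assume "w \<in> W"
    then have "etensor3 (fx w) (fy w) (fz w) \<subseteq> lub tensor3 ((\<lambda>w. etensor3 (fx w) (fy w) (fz w)) ` W)"
      by (intro lub_tensor3_upper) auto
    moreover have "(fx w, fy w, fz w) \<in> etensor3 (fx w) (fy w) (fz w)" by (simp add: etensor3_def)
    ultimately show "(fx w, fy w, fz w) \<in> lub tensor3 ((\<lambda>w. etensor3 (fx w) (fy w) (fz w)) ` W)" by blast
  qed
  then show "etensor3 x y z \<subseteq> lub tensor3 ((\<lambda>w. etensor3 (fx w) (fy w) (fz w)) ` W)"
    by (rule e3_sub_tri_ideal[OF T])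
qed

lemma e3_Sup1: "etensor3 (Sup S) y z = lub tensor3 ((\<lambda>x. etensor3 x y z) ` S)"
  by (rule e3_Sup_gen[where fx="\<lambda>x. x" and fy="\<lambda>_. y" and fz="\<lambda>_. z", simplified])
     (auto intro: Sup_upper tri_ideal_D2)

lemma e3_Sup2: "etensor3 x (Sup S) z = lub tensor3 ((\<lambda>y. etensor3 x y z) ` S)"
  by (rule e3_Sup_gen[where fx="\<lambda>_. x" and fy="\<lambda>y. y" and fz="\<lambda>_. z", simplified])
     (auto intro: Sup_upper tri_ideal_D3)

lemma e3_Sup3: "etensor3 x y (Sup S) = lub tensor3 ((\<lambda>z. etensor3 x y z) ` S)"
  by (rule e3_Sup_gen[where fx="\<lambda>_. x" and fy="\<lambda>_. y" and fz="\<lambda>z. z", simplified])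
     (auto intro: Sup_upper tri_ideal_D4)

lemma sp_lub: "sup_preserving tensor3 tlat p \<Longrightarrow> Ds \<subseteq> Collect tri_ideal \<Longrightarrow> p (lub tensor3 Ds) = Sup (p ` Ds)"
  unfolding sup_preserving_def lub_tlat carrier_tensor3 by blast

lemma e3_image_sub: "(\<lambda>(a, b, c). etensor3 a b c) ` T \<subseteq> Collect tri_ideal"
  by (auto simp: tri_ideal_e3 split: prod.split)

definition trilin :: "('a::complete_lattice \<Rightarrow> 'b::complete_lattice \<Rightarrow> 'c::complete_lattice \<Rightarrow> 'd::complete_lattice) \<Rightarrow> bool" where
  "trilin t \<longleftrightarrow> (\<forall>S b c. t (Sup S) b c = (SUP a\<in>S. t a b c)) \<and>
     (\<forall>a T c. t a (Sup T) c = (SUP b\<in>T. t a b c)) \<and> (\<forall>a b U. t a b (Sup U) = (SUP c\<in>U. t a b c))"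

lemma trilinD1: "trilin t \<Longrightarrow> t (Sup S) b c = (SUP a\<in>S. t a b c)"
  and trilinD2: "trilin t \<Longrightarrow> t a (Sup T) c = (SUP b\<in>T. t a b c)"
  and trilinD3: "trilin t \<Longrightarrow> t a b (Sup U) = (SUP c\<in>U. t a b c)"
  unfolding trilin_def by simp_all

lemma trilin_mono1: "trilin t \<Longrightarrow> a \<le> a' \<Longrightarrow> t a b c \<le> t a' b c"
  using trilinD1[of t "{a, a'}" b c] by (simp add: sup_absorb2 le_iff_sup)
lemma trilin_mono2: "trilin t \<Longrightarrow> b \<le> b' \<Longrightarrow> t a b c \<le> t a b' c"
  using trilinD2[of t a "{b, b'}" c] by (simp add: sup_absorb2 le_iff_sup)
lemma trilin_mono3: "trilin t \<Longrightarrow> c \<le> c' \<Longrightarrow> t a b c \<le> t a b c'"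
  using trilinD3[of t a b "{c, c'}"] by (simp add: sup_absorb2 le_iff_sup)
lemma trilin_mono: "trilin t \<Longrightarrow> a \<le> a' \<Longrightarrow> b \<le> b' \<Longrightarrow> c \<le> c' \<Longrightarrow> t a b c \<le> t a' b' c'"
  by (meson order_trans trilin_mono1 trilin_mono2 trilin_mono3)
lemma trilin_bot: "trilin t \<Longrightarrow> t bot b c = bot" "trilin t \<Longrightarrow> t a bot c = bot" "trilin t \<Longrightarrow> t a b bot = bot"
  using trilinD1[of t "{}" b c] trilinD2[of t a "{}" c] trilinD3[of t a b "{}"] by simp_all

definition PM :: "('a::complete_lattice \<Rightarrow> 'b::complete_lattice \<Rightarrow> 'c::complete_lattice \<Rightarrow> 'd::complete_lattice) \<Rightarrow> ('a \<times> 'b \<times> 'c) set \<Rightarrow> 'd" where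
  "PM t D = (SUP (a, b, c)\<in>D. t a b c)"

lemma PM_e3:
  assumes "trilin t" shows "PM t (etensor3 x y z) = t x y z"
proof (rule antisym)
  show "PM t (etensor3 x y z) \<le> t x y z"
    unfolding PM_def
  proof (rule SUP_least)
    fix w assume "w \<in> etensor3 x y z"
    then obtain a b c where w: "w = (a, b, c)" and
      h: "(a \<le> x \<and> b \<le> y \<and> c \<le> z) \<or> a = bot \<or> b = bot \<or> c = bot"
      unfolding etensor3_def by (cases w) auto
    from h show "(\<lambda>(a, b, c). t a b c) w \<le> t x y z"
      unfolding w using trilin_mono[OF assms] trilin_bot[OF assms] by auto
  qed
  show "t x y z \<le> PM t (etensor3 x y z)"
    unfolding PM_def by (rule SUP_upper2[of "(x, y, z)"]) (auto simp: etensor3_def)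
qed

lemma PM_mono: "D \<subseteq> E \<Longrightarrow> PM t D \<le> PM t E"
  unfolding PM_def by (rule SUP_subset_mono) auto

lemma PM_upper: "(a, b, c) \<in> D \<Longrightarrow> t a b c \<le> PM t D"
  unfolding PM_def by (rule SUP_upper2[of "(a, b, c)"]) auto

lemma PM_sp:
  assumes "trilin t" shows "sup_preserving tensor3 tlat (PM t)"
  unfolding sup_preserving_def lub_tlat
proof (intro conjI allI impI ballI)
  fix Ds :: "('a \<times> 'b \<times> 'c) set set" assume "Ds \<subseteq> carrier tensor3"
  define m where "m = Sup (PM t ` Ds)"
  define E0 where "E0 = {(a, b, c). t a b c \<le> m}"
  have "tri_ideal E0"
  proof (rule tri_idealI)
    fix a b c a' b' c' assume "(a, b, c) \<in> E0" "a' \<le> a" "b' \<le> b" "c' \<le> c"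
    then show "(a', b', c') \<in> E0" unfolding E0_def using trilin_mono[OF assms, of a' a b' b c' c]
      by auto
  next
    fix S b c assume "\<And>a. a \<in> S \<Longrightarrow> (a, b, c) \<in> E0"
    then show "(Sup S, b, c) \<in> E0" unfolding E0_def by (auto simp: trilinD1[OF assms] intro!: SUP_least)
  next
    fix T a c assume "\<And>b. b \<in> T \<Longrightarrow> (a, b, c) \<in> E0"
    then show "(a, Sup T, c) \<in> E0" unfolding E0_def by (auto simp: trilinD2[OF assms] intro!: SUP_least)
  next
    fix U a b assume "\<And>c. c \<in> U \<Longrightarrow> (a, b, c) \<in> E0"
    then show "(a, b, Sup U) \<in> E0" unfolding E0_def by (auto simp: trilinD3[OF assms] intro!: SUP_least)
  qed
  have "lub tensor3 Ds \<subseteq> E0"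
  proof (rule lub_tensor3_least[OF \<open>tri_ideal E0\<close>])
    fix D assume "D \<in> Ds"
    show "D \<subseteq> E0"
    proof
      fix w assume "w \<in> D"
      obtain a b c where w: "w = (a, b, c)" by (cases w) auto
      have "t a b c \<le> PM t D" using \<open>w \<in> D\<close> w by (simp add: PM_upper)
      also have "\<dots> \<le> m" unfolding m_def using \<open>D \<in> Ds\<close> by (rule SUP_upper)
      finally show "w \<in> E0" unfolding E0_def w by simp
    qed
  qed
  then have "PM t (lub tensor3 Ds) \<le> m"
    unfolding PM_def E0_def by (auto intro!: SUP_least)
  moreover have "m \<le> PM t (lub tensor3 Ds)"
    unfolding m_def by (auto intro!: SUP_least PM_mono lub_tensor3_upper)
  ultimately show "PM t (lub tensor3 Ds) = Sup (PM t ` Ds)" unfolding m_def by (rule antisym)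
qed simp

lemma PM_surj:
  assumes "trilin t" and "\<And>x. \<exists>T. x = (SUP (a, b, c)\<in>T. t a b c)"
  shows "PM t ` carrier tensor3 = UNIV"
proof -
  have "x \<in> PM t ` carrier tensor3" for x
  proof -
    obtain T where T: "x = (SUP (a, b, c)\<in>T. t a b c)" using assms(2) by blast
    define D where "D = lub tensor3 ((\<lambda>(a, b, c). etensor3 a b c) ` T)"
    have D: "D \<in> carrier tensor3" unfolding D_def carrier_tensor3 by (simp add: tri_ideal_lub)
    have "PM t D = Sup (PM t ` (\<lambda>(a, b, c). etensor3 a b c) ` T)"
      unfolding D_def by (rule sp_lub[OF PM_sp[OF assms(1)] e3_image_sub])
    also have "\<dots> = (SUP (a, b, c)\<in>T. t a b c)"
      by (simp add: image_image case_prod_unfold PM_e3[OF assms(1)])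
    finally show ?thesis using D T by (metis image_eqI)
  qed
  then show ?thesis by blast
qed

lemma sp_trilin:
  assumes "sup_preserving tensor3 tlat p"
  shows "trilin (\<lambda>a b c. p (etensor3 a b c))"
proof -
  have sp: "p (lub tensor3 Ds) = Sup (p ` Ds)" if "Ds \<subseteq> carrier tensor3" for Ds
    using assms that unfolding sup_preserving_def lub_tlat by blast
  have C: "f ` S \<subseteq> carrier tensor3" if "\<And>s. f s = etensor3 (g1 s) (g2 s) (g3 s)" for f g1 g2 g3 and S :: "'q set"
    using that by (auto simp: carrier_tensor3 tri_ideal_e3)
  show ?thesis unfolding trilin_def
  proof (intro conjI allI)
    fix S b c
    show "p (etensor3 (Sup S) b c) = (SUP a\<in>S. p (etensor3 a b c))"
      unfolding e3_Sup1 by (subst sp) (auto simp: carrier_tensor3 tri_ideal_e3 image_image)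
  next
    fix a T c
    show "p (etensor3 a (Sup T) c) = (SUP b\<in>T. p (etensor3 a b c))"
      unfolding e3_Sup2 by (subst sp) (auto simp: carrier_tensor3 tri_ideal_e3 image_image)
  next
    fix a b U
    show "p (etensor3 a b (Sup U)) = (SUP c\<in>U. p (etensor3 a b c))"
      unfolding e3_Sup3 by (subst sp) (auto simp: carrier_tensor3 tri_ideal_e3 image_image)
  qed
qed

lemma sp_gen:
  assumes "sup_preserving tensor3 tlat p" "p ` carrier tensor3 = UNIV"
  shows "\<exists>T. x = (SUP (a, b, c)\<in>T. p (etensor3 a b c))"
proof -
  obtain D where D: "D \<in> carrier tensor3" "x = p D" using assms(2) by (metis UNIV_I imageE)
  then have TD: "tri_ideal D" by (simp add: carrier_tensor3)
  have "p D = p (lub tensor3 ((\<lambda>(a, b, c). etensor3 a b c) ` D))" by (simp add: tri_decomp[OF TD])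
  also have "\<dots> = Sup (p ` (\<lambda>(a, b, c). etensor3 a b c) ` D)"
    by (rule sp_lub[OF assms(1) e3_image_sub])
  also have "\<dots> = (SUP (a, b, c)\<in>D. p (etensor3 a b c))"
    by (simp add: image_image case_prod_unfold)
  finally show ?thesis using D by blast
qed

abbreviation ev3 :: "(('a::complete_lattice \<times> 'b::complete_lattice \<times> 'c::complete_lattice) set \<Rightarrow> 'd) \<Rightarrow> 'a \<Rightarrow> 'b \<Rightarrow> 'c \<Rightarrow> 'd" where
  "ev3 f a b c \<equiv> f (etensor3 a b c)"

lemma SUP_Sigma:
  fixes f :: "'a \<times> 'b \<Rightarrow> 'c::complete_lattice"
  shows "(SUP z\<in>Sigma S T. f z) = (SUP s\<in>S. SUP t\<in>T s. f (s, t))"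
  by (rule antisym) (auto intro!: SUP_least SUP_upper2)

locale mp =
  fixes p :: "('x::complete_lattice \<times> 'y::complete_lattice \<times> 'x) set \<Rightarrow> 'x"
    and q :: "('y \<times> 'x \<times> 'y) set \<Rightarrow> 'y"
  assumes sp_p: "sup_preserving tensor3 tlat p" and su_p: "p ` carrier tensor3 = UNIV"
    and sp_q: "sup_preserving tensor3 tlat q" and su_q: "q ` carrier tensor3 = UNIV"
    and c1a: "ev3 p (ev3 p x1 y1 x2) y2 x3 = ev3 p x1 (ev3 q y1 x2 y2) x3"
    and c1b: "ev3 p x1 (ev3 q y1 x2 y2) x3 = ev3 p x1 y1 (ev3 p x2 y2 x3)"
    and c2a: "ev3 q (ev3 q y1 x1 y2) x2 y3 = ev3 q y1 (ev3 p x1 y2 x2) y3"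
    and c2b: "ev3 q y1 (ev3 p x1 y2 x2) y3 = ev3 q y1 x1 (ev3 q y2 x2 y3)"
    and c3: "(\<And>u v. ev3 p u v x1 = ev3 p u v x2) \<Longrightarrow> x1 = x2"
    and c4: "(\<And>u v. ev3 p x1 v u = ev3 p x2 v u) \<Longrightarrow> x1 = x2"
    and c5: "(\<And>v u. ev3 q v u y1 = ev3 q v u y2) \<Longrightarrow> y1 = y2"
    and c6: "(\<And>u v. ev3 q y1 u v = ev3 q y2 u v) \<Longrightarrow> y1 = y2"
begin

lemma tl: "trilin (\<lambda>a b c. ev3 p a b c)"
  by (rule sp_trilin[OF sp_p])

lemma lin1: "ev3 p (Sup S) b c = (SUP a\<in>S. ev3 p a b c)"
  using trilinD1[OF tl] by simp
lemma lin2: "ev3 p a (Sup T) c = (SUP b\<in>T. ev3 p a b c)"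
  using trilinD2[OF tl] by simp
lemma lin3: "ev3 p a b (Sup U) = (SUP c\<in>U. ev3 p a b c)"
  using trilinD3[OF tl] by simp
lemma pmono: "a \<le> a' \<Longrightarrow> b \<le> b' \<Longrightarrow> c \<le> c' \<Longrightarrow> ev3 p a b c \<le> ev3 p a' b' c'"
  using trilin_mono[OF tl] by simp
lemma pbot: "ev3 p bot b c = bot" "ev3 p a bot c = bot" "ev3 p a b bot = bot"
  using trilin_bot[OF tl] by simp_all
lemma c1: "ev3 p (ev3 p x1 y1 x2) y2 x3 = ev3 p x1 y1 (ev3 p x2 y2 x3)"
  using c1a c1b by simp

lemma gen: "\<exists>T. x = (SUP w\<in>T. ev3 p (fst w) (fst (snd w)) (snd (snd w)))"
  using sp_gen[OF sp_p su_p, of x] by (simp add: case_prod_unfold)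

end

lemma mp_sym:
  assumes "mp p q" shows "mp q p"
proof -
  interpret mp p q by fact
  show ?thesis
    apply unfold_locales
    apply (fact sp_q su_q sp_p su_p c2a c2b c1a c1b)+
    subgoal by (rule c5) simp
    subgoal by (rule c6) simp
    subgoal by (rule c3) simp
    subgoal by (rule c4) simp
    done
qed

sublocale mp \<subseteq> sw: mp q p
  by (rule mp_sym) (rule mp_axioms)


definition LA :: "(('x::complete_lattice \<times> 'y::complete_lattice \<times> 'x) set \<Rightarrow> 'x) \<Rightarrow> ('x \<times> 'y) set \<Rightarrow> 'x \<Rightarrow> 'x" where
  "LA p S z = (SUP w\<in>S. ev3 p (fst w) (snd w) z)"

definition clA :: "(('x::complete_lattice \<times> 'y::complete_lattice \<times> 'x) set \<Rightarrow> 'x) \<Rightarrow> ('x \<times> 'y) set \<Rightarrow> ('x \<times> 'y) set" where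
  "clA p S = {w. \<forall>z. ev3 p (fst w) (snd w) z \<le> LA p S z}"

definition prodA :: "(('x::complete_lattice \<times> 'y::complete_lattice \<times> 'x) set \<Rightarrow> 'x) \<Rightarrow> ('x \<times> 'y) set \<Rightarrow> ('x \<times> 'y) set \<Rightarrow> ('x \<times> 'y) set" where
  "prodA p S T = (\<lambda>w. (ev3 p (fst (fst w)) (snd (fst w)) (fst (snd w)), snd (snd w))) ` (S \<times> T)"

definition QA :: "(('x::complete_lattice \<times> 'y::complete_lattice \<times> 'x) set \<Rightarrow> 'x) \<Rightarrow> ('x \<times> 'y) set quantale" where
  "QA p = \<lparr>carrier = range (clA p), le = (\<subseteq>), mult = (\<lambda>S T. clA p (prodA p S T))\<rparr>"

definition RA :: "(('y::complete_lattice \<times> 'x::complete_lattice \<times> 'y) set \<Rightarrow> 'y) \<Rightarrow> 'y \<Rightarrow> ('x \<times> 'y) set \<Rightarrow> 'y" where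
  "RA q y S = (SUP w\<in>S. ev3 q y (fst w) (snd w))"

lemma QA_carrier: "carrier (QA p) = range (clA p)"
  and QA_le: "le (QA p) = (\<subseteq>)"
  and QA_mult: "mult (QA p) S T = clA p (prodA p S T)"
  by (simp_all add: QA_def)

context mp begin

lemma LA_single: "LA p {(x, y)} z = ev3 p x y z"
  by (simp add: LA_def)

lemma LA_Un: "LA p (\<Union>Ss) z = (SUP S\<in>Ss. LA p S z)"
  unfolding LA_def using SUP_UNION[of "\<lambda>w. ev3 p (fst w) (snd w) z" "\<lambda>S. S" Ss] by simp

lemma LA_mono: "S \<subseteq> T \<Longrightarrow> LA p S z \<le> LA p T z"
  unfolding LA_def by (rule SUP_subset_mono) auto

lemma LA_Sup: "LA p S (Sup Z) = (SUP z\<in>Z. LA p S z)"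
  unfolding LA_def lin3 by (rule SUP_commute)

lemma LA_upper: "w \<in> S \<Longrightarrow> ev3 p (fst w) (snd w) z \<le> LA p S z"
  unfolding LA_def by (rule SUP_upper)

lemma sub_cl: "S \<subseteq> clA p S"
  unfolding clA_def by (auto intro: LA_upper)

lemma LA_cl: "LA p (clA p S) = LA p S"
proof (rule ext, rule antisym)
  fix z
  show "LA p (clA p S) z \<le> LA p S z"
    unfolding LA_def[of p "clA p S"] by (rule SUP_least) (simp add: clA_def)
  show "LA p S z \<le> LA p (clA p S) z" by (rule LA_mono[OF sub_cl])
qed

lemma cl_eq_iff: "clA p S = clA p T \<longleftrightarrow> LA p S = LA p T"
proof
  assume "clA p S = clA p T"
  then show "LA p S = LA p T" by (metis LA_cl)
qed (simp add: clA_def)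

lemma cl_sub_iff: "clA p S \<subseteq> clA p T \<longleftrightarrow> (\<forall>z. LA p S z \<le> LA p T z)"
proof
  assume "clA p S \<subseteq> clA p T"
  then show "\<forall>z. LA p S z \<le> LA p T z" by (metis LA_cl LA_mono)
qed (auto simp: clA_def intro: order_trans)

lemma cl_idem: "clA p (clA p S) = clA p S"
  by (simp add: cl_eq_iff LA_cl)

lemma in_range_cl: "D \<in> range (clA p) \<longleftrightarrow> clA p D = D"
  by (metis cl_idem rangeE rangeI)

lemma LA_prod: "LA p (prodA p S T) z = LA p S (LA p T z)"
proof -
  have "LA p (prodA p S T) z = (SUP w\<in>S \<times> T. ev3 p (ev3 p (fst (fst w)) (snd (fst w)) (fst (snd w))) (snd (snd w)) z)"
    unfolding LA_def prodA_def by (simp add: image_image)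
  also have "\<dots> = (SUP s\<in>S. SUP t\<in>T. ev3 p (ev3 p (fst s) (snd s) (fst t)) (snd t) z)"
    using SUP_times[of "\<lambda>w. ev3 p (ev3 p (fst (fst w)) (snd (fst w)) (fst (snd w))) (snd (snd w)) z" S T] by simp
  also have "\<dots> = (SUP s\<in>S. SUP t\<in>T. ev3 p (fst s) (snd s) (ev3 p (fst t) (snd t) z))"
    by (simp add: c1)
  also have "\<dots> = LA p S (LA p T z)"
    unfolding LA_def lin3 by (simp add: image_image)
  finally show ?thesis .
qed

lemma lub_QA:
  assumes "Ss \<subseteq> carrier (QA p)"
  shows "lub (QA p) Ss = clA p (\<Union>Ss)"
proof (rule lub_eqI)
  show "is_lub (QA p) Ss (clA p (\<Union>Ss))"
    unfolding is_lub_def QA_carrier QA_le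
  proof (intro conjI ballI impI)
    fix D assume "D \<in> Ss"
    then have "D \<in> range (clA p)" using assms by (auto simp: QA_carrier)
    then have "clA p D = D" using in_range_cl by blast
    moreover have "clA p D \<subseteq> clA p (\<Union>Ss)" unfolding cl_sub_iff using \<open>D \<in> Ss\<close> by (auto intro: LA_mono)
    ultimately show "D \<subseteq> clA p (\<Union>Ss)" by simp
  next
    fix Z assume "Z \<in> range (clA p)" "\<forall>D\<in>Ss. D \<subseteq> Z"
    then have "clA p (\<Union>Ss) \<subseteq> clA p Z" unfolding cl_sub_iff by (auto intro: LA_mono)
    then show "clA p (\<Union>Ss) \<subseteq> Z" using \<open>Z \<in> range (clA p)\<close> by (simp add: in_range_cl)
  qed simp
qed (simp add: QA_le)

lemma sup_lattice_QA: "sup_lattice (QA p)"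
  unfolding sup_lattice_def
proof (intro conjI ballI allI impI)
  fix Ss assume "Ss \<subseteq> carrier (QA p)"
  have "is_lub (QA p) Ss (lub (QA p) Ss)"
    unfolding lub_QA[OF \<open>Ss \<subseteq> carrier (QA p)\<close>] is_lub_def QA_carrier QA_le
  proof (intro conjI ballI impI)
    fix D assume "D \<in> Ss"
    then have "D \<in> range (clA p)" using \<open>Ss \<subseteq> carrier (QA p)\<close> by (auto simp: QA_carrier)
    then have "clA p D = D" using in_range_cl by blast
    moreover have "clA p D \<subseteq> clA p (\<Union>Ss)" unfolding cl_sub_iff using \<open>D \<in> Ss\<close> by (auto intro: LA_mono)
    ultimately show "D \<subseteq> clA p (\<Union>Ss)" by simp
  next
    fix Z assume "Z \<in> range (clA p)" "\<forall>D\<in>Ss. D \<subseteq> Z"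
    then have "clA p (\<Union>Ss) \<subseteq> clA p Z" unfolding cl_sub_iff by (auto intro: LA_mono)
    then show "clA p (\<Union>Ss) \<subseteq> Z" using \<open>Z \<in> range (clA p)\<close> by (simp add: in_range_cl)
  qed simp
  then show "\<exists>s. is_lub (QA p) Ss s" by blast
qed (auto simp: QA_le)

lemma LA_lub: "Ss \<subseteq> carrier (QA p) \<Longrightarrow> LA p (lub (QA p) Ss) z = (SUP S\<in>Ss. LA p S z)"
  by (simp add: lub_QA LA_cl LA_Un)

lemma mult_closed: "mult (QA p) S T \<in> carrier (QA p)"
  by (simp add: QA_mult QA_carrier)

lemma LA_mult: "LA p (mult (QA p) S T) z = LA p S (LA p T z)"
  by (simp add: QA_mult LA_cl LA_prod)

lemma car_eqI: "S \<in> carrier (QA p) \<Longrightarrow> T \<in> carrier (QA p) \<Longrightarrow> (\<And>z. LA p S z = LA p T z) \<Longrightarrow> S = T"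
  by (metis QA_carrier cl_eq_iff in_range_cl ext)

lemma lub_closed: "Ss \<subseteq> carrier (QA p) \<Longrightarrow> lub (QA p) Ss \<in> carrier (QA p)"
  by (simp add: lub_QA QA_carrier)

lemma quantale_QA: "quantale (QA p)"
  unfolding quantale_def
proof (intro conjI ballI allI impI)
  show "sup_lattice (QA p)" by (rule sup_lattice_QA)
  fix a b assume "a \<in> carrier (QA p)" "b \<in> carrier (QA p)"
  show "mult (QA p) a b \<in> carrier (QA p)" by (rule mult_closed)
  fix c assume "c \<in> carrier (QA p)"
  show "mult (QA p) (mult (QA p) a b) c = mult (QA p) a (mult (QA p) b c)"
    by (rule car_eqI) (simp_all add: mult_closed LA_mult)
next
  fix a S assume "a \<in> carrier (QA p)" "S \<subseteq> carrier (QA p)"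
  have "mult (QA p) a ` S \<subseteq> carrier (QA p)" by (auto simp: mult_closed)
  then show "mult (QA p) a (lub (QA p) S) = lub (QA p) (mult (QA p) a ` S)"
    by (intro car_eqI) (simp_all add: mult_closed lub_closed LA_mult LA_lub \<open>S \<subseteq> carrier (QA p)\<close> LA_Sup image_image)
next
  fix a S assume "a \<in> carrier (QA p)" "S \<subseteq> carrier (QA p)"
  have "(\<lambda>s. mult (QA p) s a) ` S \<subseteq> carrier (QA p)" by (auto simp: mult_closed)
  then show "mult (QA p) (lub (QA p) S) a = lub (QA p) ((\<lambda>s. mult (QA p) s a) ` S)"
    by (intro car_eqI) (simp_all add: mult_closed lub_closed LA_mult LA_lub \<open>S \<subseteq> carrier (QA p)\<close> image_image)
qed

end

context mp begin

lemma cl_car: "clA p S \<in> carrier (QA p)"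
  by (simp add: QA_carrier)

lemma cl_single_car: "clA p {(x, y)} \<in> carrier (QA p)"
  by (simp add: QA_carrier)

lemma LA_cl_single: "LA p (clA p {(x, y)}) z = ev3 p x y z"
  by (simp add: LA_cl LA_single)

lemma LX_mreg: "left_mregular (QA p) tlat (LA p)"
  unfolding left_mregular_def left_module_def
proof (intro conjI ballI allI impI)
  show "quantale (QA p)" by (rule quantale_QA)
  show "sup_lattice tlat" by (rule sup_lattice_tlat)
next
  fix m a b assume "a \<in> carrier (QA p)" "b \<in> carrier (QA p)"
  show "LA p (mult (QA p) a b) m = LA p a (LA p b m)" by (rule LA_mult)
next
  fix a S assume "a \<in> carrier (QA p)"
  show "LA p a (lub tlat S) = lub tlat (LA p a ` S)" by (simp add: lub_tlat LA_Sup)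
next
  fix m :: 'x and S assume "S \<subseteq> carrier (QA p)"
  then show "LA p (lub (QA p) S) m = lub tlat ((\<lambda>a. LA p a m) ` S)" by (simp add: lub_tlat LA_lub)
next
  fix m :: 'x
  obtain T where T: "m = (SUP w\<in>T. ev3 p (fst w) (fst (snd w)) (snd (snd w)))" using gen by blast
  let ?S = "(\<lambda>w. LA p (clA p {(fst w, fst (snd w))}) (snd (snd w))) ` T"
  have "?S \<subseteq> {LA p a n |a n. a \<in> carrier (QA p) \<and> n \<in> carrier tlat}"
    using cl_single_car by auto
  moreover have "m = lub tlat ?S" unfolding lub_tlat T by (simp add: image_image LA_cl_single)
  ultimately show "\<exists>S. S \<subseteq> {LA p a n |a n. a \<in> carrier (QA p) \<and> n \<in> carrier tlat} \<and> m = lub tlat S" by blast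
next
  fix m n :: 'x assume "\<forall>a\<in>carrier (QA p). LA p a m = LA p a n"
  then have "\<And>u v. ev3 p u v m = ev3 p u v n" using cl_single_car by (metis LA_cl_single)
  then show "m = n" by (rule c3)
qed simp

lemma RA_key: "ev3 q (RA q y S) u v = ev3 q y (LA p S u) v"
  by (simp add: RA_def LA_def sw.lin1 sw.lin2 image_image c2a)

lemma RA_cong: "LA p S = LA p T \<Longrightarrow> RA q y S = RA q y T"
  by (rule c6) (simp add: RA_key)

lemma RA_cl: "RA q y (clA p S) = RA q y S"
  by (rule RA_cong) (rule LA_cl)

lemma RA_single: "RA q y {(x, y')} = ev3 q y x y'"
  by (simp add: RA_def)

lemma RA_cl_single: "RA q y (clA p {w}) = ev3 q y (fst w) (snd w)"
  by (simp only: RA_cl) (simp add: RA_def)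

lemma RA_Un: "RA q y (\<Union>Ss) = (SUP S\<in>Ss. RA q y S)"
  unfolding RA_def using SUP_UNION[of "\<lambda>w. ev3 q y (fst w) (snd w)" "\<lambda>S. S" Ss] by simp

lemma RA_prod: "RA q y (prodA p S T) = RA q (RA q y S) T"
proof -
  have "RA q y (prodA p S T) = (SUP w\<in>S \<times> T. ev3 q y (ev3 p (fst (fst w)) (snd (fst w)) (fst (snd w))) (snd (snd w)))"
    unfolding RA_def prodA_def by (simp add: image_image)
  also have "\<dots> = (SUP s\<in>S. SUP t\<in>T. ev3 q y (ev3 p (fst s) (snd s) (fst t)) (snd t))"
    using SUP_times[of "\<lambda>w. ev3 q y (ev3 p (fst (fst w)) (snd (fst w)) (fst (snd w))) (snd (snd w))" S T] by simp
  also have "\<dots> = (SUP s\<in>S. SUP t\<in>T. ev3 q (ev3 q y (fst s) (snd s)) (fst t) (snd t))"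
    by (simp add: c2a)
  also have "\<dots> = (SUP t\<in>T. SUP s\<in>S. ev3 q (ev3 q y (fst s) (snd s)) (fst t) (snd t))"
    by (rule SUP_commute)
  also have "\<dots> = RA q (RA q y S) T"
    unfolding RA_def[of q _ T] unfolding RA_def sw.lin1 by (simp add: image_image)
  finally show ?thesis .
qed

lemma RA_Sup: "RA q (Sup Ys) S = (SUP y\<in>Ys. RA q y S)"
  unfolding RA_def sw.lin1 by (rule SUP_commute)

lemma RY_mreg: "right_mregular (QA p) (tlat :: 'y slat) (RA q)"
  unfolding right_mregular_def right_module_def
proof (intro conjI ballI allI impI)
  show "quantale (QA p)" by (rule quantale_QA)
  show "sup_lattice (tlat :: 'y slat)" by (rule sup_lattice_tlat)
next
  fix m a b assume "a \<in> carrier (QA p)" "b \<in> carrier (QA p)"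
  show "RA q m (mult (QA p) a b) = RA q (RA q m a) b" by (simp add: QA_mult RA_cl RA_prod)
next
  fix a S assume "a \<in> carrier (QA p)"
  show "RA q (lub tlat S) a = lub tlat ((\<lambda>m. RA q m a) ` S)" by (simp add: lub_tlat RA_Sup)
next
  fix m :: 'y and S assume "S \<subseteq> carrier (QA p)"
  then show "RA q m (lub (QA p) S) = lub tlat (RA q m ` S)" by (simp add: lub_tlat lub_QA RA_cl RA_Un)
next
  fix m :: 'y
  obtain T where T: "m = (SUP w\<in>T. ev3 q (fst w) (fst (snd w)) (snd (snd w)))" using sw.gen by blast
  let ?S = "(\<lambda>w. RA q (fst w) (clA p {(fst (snd w), snd (snd w))})) ` T"
  have "?S \<subseteq> {RA q n a |n a. n \<in> carrier tlat \<and> a \<in> carrier (QA p)}"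
  proof (rule image_subsetI)
    fix w assume "w \<in> T"
    show "RA q (fst w) (clA p {(fst (snd w), snd (snd w))}) \<in> {RA q n a |n a. n \<in> carrier tlat \<and> a \<in> carrier (QA p)}"
      by (rule CollectI, rule exI[of _ "fst w"], rule exI[of _ "clA p {(fst (snd w), snd (snd w))}"])
         (simp add: cl_car)
  qed
  moreover have "m = lub tlat ?S" unfolding lub_tlat T by (simp add: image_image RA_cl_single)
  ultimately show "\<exists>S. S \<subseteq> {RA q n a |n a. n \<in> carrier tlat \<and> a \<in> carrier (QA p)} \<and> m = lub tlat S" by blast
next
  fix m n :: 'y assume "\<forall>a\<in>carrier (QA p). RA q m a = RA q n a"
  then have "\<And>u v. ev3 q m u v = ev3 q n u v" using cl_single_car by (metis RA_cl RA_single)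
  then show "m = n" by (rule c6)
qed simp

end

context mp begin

lemma mult_assoc: "mult (QA p) (mult (QA p) a b) c = mult (QA p) a (mult (QA p) b c)"
  by (rule car_eqI) (simp_all add: mult_closed LA_mult)

lemma mult_lub_r: "S \<subseteq> carrier (QA p) \<Longrightarrow> mult (QA p) a (lub (QA p) S) = lub (QA p) (mult (QA p) a ` S)"
proof -
  assume S: "S \<subseteq> carrier (QA p)"
  have "mult (QA p) a ` S \<subseteq> carrier (QA p)" by (auto simp: mult_closed)
  then show ?thesis
    by (intro car_eqI) (simp_all add: mult_closed lub_closed LA_mult LA_lub S LA_Sup image_image)
qed

lemma mult_lub_l: "S \<subseteq> carrier (QA p) \<Longrightarrow> mult (QA p) (lub (QA p) S) a = lub (QA p) ((\<lambda>s. mult (QA p) s a) ` S)"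
proof -
  assume S: "S \<subseteq> carrier (QA p)"
  have "(\<lambda>s. mult (QA p) s a) ` S \<subseteq> carrier (QA p)" by (auto simp: mult_closed)
  then show ?thesis
    by (intro car_eqI) (simp_all add: mult_closed lub_closed LA_mult LA_lub S image_image)
qed

definition Tf :: "'x \<Rightarrow> ('x \<times> 'y \<times> 'x) set" where
  "Tf x = (SOME T. x = (SUP w\<in>T. ev3 p (fst w) (fst (snd w)) (snd (snd w))))"

lemma Tf: "x = (SUP w\<in>Tf x. ev3 p (fst w) (fst (snd w)) (snd (snd w)))"
  unfolding Tf_def by (rule someI_ex[OF gen])

lemma QA_essential:
  assumes m: "m \<in> carrier (QA p)"
  shows "\<exists>S. S \<subseteq> {mult (QA p) a n |a n. a \<in> carrier (QA p) \<and> n \<in> carrier (QA p)} \<and> m = lub (QA p) S"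
proof -
  define f where "f v = mult (QA p) (clA p {(fst (snd v), fst (snd (snd v)))}) (clA p {(snd (snd (snd v)), snd (fst v))})"
    for v :: "('x \<times> 'y) \<times> 'x \<times> 'y \<times> 'x"
  let ?S = "f ` (SIGMA w:m. Tf (fst w))"
  have sub: "?S \<subseteq> {mult (QA p) a n |a n. a \<in> carrier (QA p) \<and> n \<in> carrier (QA p)}"
    unfolding f_def using cl_car by blast
  have subc: "?S \<subseteq> carrier (QA p)" by (auto simp: f_def mult_closed)
  have "m = lub (QA p) ?S"
  proof (rule car_eqI[OF m lub_closed[OF subc]])
    fix z
    have e: "ev3 p (fst w) (snd w) z = (SUP t\<in>Tf (fst w). ev3 p (fst t) (fst (snd t)) (ev3 p (snd (snd t)) (snd w) z))" for w :: "'x \<times> 'y"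
    proof -
      have "ev3 p (fst w) (snd w) z = ev3 p (SUP t\<in>Tf (fst w). ev3 p (fst t) (fst (snd t)) (snd (snd t))) (snd w) z"
        using arg_cong[where f="\<lambda>x. ev3 p x (snd w) z", OF Tf[of "fst w"]] .
      also have "\<dots> = (SUP t\<in>Tf (fst w). ev3 p (fst t) (fst (snd t)) (ev3 p (snd (snd t)) (snd w) z))"
        by (simp add: lin1 image_image c1)
      finally show ?thesis .
    qed
    have "LA p m z = (SUP w\<in>m. SUP t\<in>Tf (fst w). ev3 p (fst t) (fst (snd t)) (ev3 p (snd (snd t)) (snd w) z))"
      unfolding LA_def e ..
    also have "\<dots> = (SUP v\<in>(SIGMA w:m. Tf (fst w)). ev3 p (fst (snd v)) (fst (snd (snd v))) (ev3 p (snd (snd (snd v))) (snd (fst v)) z))"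
      by (simp add: SUP_Sigma)
    also have "\<dots> = (SUP v\<in>(SIGMA w:m. Tf (fst w)). LA p (f v) z)"
      by (simp add: f_def LA_mult LA_cl_single)
    also have "\<dots> = LA p (lub (QA p) ?S) z"
      by (simp add: LA_lub[OF subc] image_image)
    finally show "LA p m z = LA p (lub (QA p) ?S) z" .
  qed
  with sub show ?thesis by blast
qed

lemma QA_sep_l:
  assumes "m \<in> carrier (QA p)" "n \<in> carrier (QA p)" "\<forall>c\<in>carrier (QA p). mult (QA p) c m = mult (QA p) c n"
  shows "m = n"
proof (rule car_eqI[OF assms(1,2)])
  fix z
  have "\<And>u v. ev3 p u v (LA p m z) = ev3 p u v (LA p n z)"
    using assms(3) cl_single_car by (metis LA_mult LA_cl_single)
  then show "LA p m z = LA p n z" by (rule c3)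
qed

lemma QA_sep_r:
  assumes "m \<in> carrier (QA p)" "n \<in> carrier (QA p)" "\<forall>c\<in>carrier (QA p). mult (QA p) m c = mult (QA p) n c"
  shows "m = n"
proof (rule car_eqI[OF assms(1,2)])
  fix z
  have h: "\<And>u v z. LA p m (ev3 p u v z) = LA p n (ev3 p u v z)"
    using assms(3) cl_single_car by (metis LA_mult LA_cl_single)
  obtain T where T: "z = (SUP w\<in>T. ev3 p (fst w) (fst (snd w)) (snd (snd w)))" using gen by blast
  show "LA p m z = LA p n z" unfolding T LA_Sup by (simp add: image_image h)
qed

lemma QA_mreg: "mregular_quantale (QA p)"
  unfolding mregular_quantale_def mregular_bimodule_def left_mregular_def right_mregular_def
    left_module_def right_module_def
  apply (intro conjI ballI allI impI)
  apply (simp_all only: quantale_QA sup_lattice_QA mult_closed mult_assoc mult_lub_r mult_lub_l)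
  apply (simp_all add: QA_essential)
  apply (metis QA_sep_l)
  apply (metis QA_sep_r)
  done

end

lemma lub_tensor2_upper: "D \<in> Ds \<Longrightarrow> D \<subseteq> lub tensor2 Ds"
  unfolding lub_tensor2 by (rule Inter_greatest) auto

lemma lub_tensor2_least: "bi_ideal E \<Longrightarrow> (\<And>D. D \<in> Ds \<Longrightarrow> D \<subseteq> E) \<Longrightarrow> lub tensor2 Ds \<subseteq> E"
  unfolding lub_tensor2 by (rule Inter_lower) auto

context mp begin

lemma X_comm: "RA p (LA p a m) b = LA p a (RA p m b)"
proof -
  have "RA p (LA p a m) b = (SUP w\<in>b. SUP s\<in>a. ev3 p (fst s) (snd s) (ev3 p m (fst w) (snd w)))"
    by (simp add: RA_def LA_def lin1 image_image c1)
  also have "\<dots> = (SUP s\<in>a. SUP w\<in>b. ev3 p (fst s) (snd s) (ev3 p m (fst w) (snd w)))"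
    by (rule SUP_commute)
  also have "\<dots> = LA p a (RA p m b)"
    by (simp add: RA_def LA_def lin3 image_image)
  finally show ?thesis .
qed

lemma bimodX: "mregular_bimodule (QA p) (QA q) tlat (LA p) (RA p)"
  unfolding mregular_bimodule_def using LX_mreg sw.RY_mreg X_comm by blast

lemma M2: "clA p {(Sup S, y)} = lub (QA p) ((\<lambda>x. clA p {(x, y)}) ` S)"
proof -
  have sub: "(\<lambda>x. clA p {(x, y)}) ` S \<subseteq> carrier (QA p)" by (auto simp: cl_car)
  show ?thesis
    by (rule car_eqI[OF cl_car lub_closed[OF sub]]) (simp add: LA_lub[OF sub] LA_cl_single lin1 image_image)
qed

lemma M3: "clA p {(x, Sup T)} = lub (QA p) ((\<lambda>y. clA p {(x, y)}) ` T)"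
proof -
  have sub: "(\<lambda>y. clA p {(x, y)}) ` T \<subseteq> carrier (QA p)" by (auto simp: cl_car)
  show ?thesis
    by (rule car_eqI[OF cl_car lub_closed[OF sub]]) (simp add: LA_lub[OF sub] LA_cl_single lin2 image_image)
qed

lemma M6: "clA p {(LA p a x, y)} = mult (QA p) a (clA p {(x, y)})"
  by (rule car_eqI[OF cl_car mult_closed]) (simp only: LA_mult LA_cl_single, simp add: LA_def lin1 image_image c1)

lemma M7: "clA p {(x, RA q y a)} = mult (QA p) (clA p {(x, y)}) a"
  by (rule car_eqI[OF cl_car mult_closed]) (simp only: LA_mult LA_cl_single, simp add: LA_def RA_def lin2 lin3 image_image c1b)

lemma M10: "clA p {(RA p x b, y)} = clA p {(x, LA q b y)}"
  unfolding cl_eq_iff fun_eq_iff LA_single by (simp add: LA_def RA_def lin1 lin2 image_image c1a)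

lemma M12: "LA p (clA p {(x1, y)}) x2 = RA p x1 (clA q {(y, x2)})"
  by (simp only: LA_cl_single sw.RA_cl_single) simp

lemma cl_bi: "bi_ideal (clA p S)"
proof (rule bi_idealI)
  fix a b a' b' assume "(a, b) \<in> clA p S" "a' \<le> a" "b' \<le> b"
  then show "(a', b') \<in> clA p S" unfolding clA_def
    by (auto intro: order_trans[OF pmono[OF _ _ order_refl]])
next
  fix S' b assume "\<And>a. a \<in> S' \<Longrightarrow> (a, b) \<in> clA p S"
  then show "(Sup S', b) \<in> clA p S" unfolding clA_def by (auto simp: lin1 intro!: SUP_least)
next
  fix T a assume "\<And>b. b \<in> T \<Longrightarrow> (a, b) \<in> clA p S"
  then show "(a, Sup T) \<in> clA p S" unfolding clA_def by (auto simp: lin2 intro!: SUP_least)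
qed

lemma cl_e2: "clA p (etensor2 x y) = clA p {(x, y)}"
  unfolding cl_eq_iff
proof (rule ext, rule antisym)
  fix z
  have "LA p (etensor2 x y) z \<le> ev3 p x y z"
    unfolding LA_def
  proof (rule SUP_least)
    fix w assume "w \<in> etensor2 x y"
    then have "(fst w \<le> x \<and> snd w \<le> y) \<or> fst w = bot \<or> snd w = bot"
      unfolding etensor2_def by (cases w) auto
    then show "ev3 p (fst w) (snd w) z \<le> ev3 p x y z"
      using pmono[of "fst w" x "snd w" y z z] pbot by auto
  qed
  then show "LA p (etensor2 x y) z \<le> LA p {(x, y)} z" by (simp add: LA_single)
  show "LA p {(x, y)} z \<le> LA p (etensor2 x y) z"
    by (rule LA_mono) (auto simp: etensor2_def)
qed

lemma M14: "\<exists>f. sup_preserving tensor2 (QA p) f \<and> (\<forall>x y. f (etensor2 x y) = clA p {(x, y)}) \<and>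
    f ` carrier tensor2 = carrier (QA p)"
proof (intro exI conjI allI)
  show "sup_preserving tensor2 (QA p) (clA p)"
    unfolding sup_preserving_def
  proof (intro conjI ballI allI impI)
    fix Ds :: "('x \<times> 'y) set set" assume Ds: "Ds \<subseteq> carrier tensor2"
    have sub: "clA p ` Ds \<subseteq> carrier (QA p)" by (auto simp: cl_car)
    have "LA p (lub tensor2 Ds) z = LA p (\<Union>(clA p ` Ds)) z" for z
    proof (rule antisym)
      have "lub tensor2 Ds \<subseteq> clA p (\<Union>Ds)"
        by (rule lub_tensor2_least[OF cl_bi]) (use sub_cl in blast)
      then have "LA p (lub tensor2 Ds) z \<le> LA p (clA p (\<Union>Ds)) z" by (rule LA_mono)
      also have "\<dots> = LA p (\<Union>(clA p ` Ds)) z" by (simp add: LA_cl LA_Un image_image)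
      finally show "LA p (lub tensor2 Ds) z \<le> LA p (\<Union>(clA p ` Ds)) z" .
      have "LA p (\<Union>(clA p ` Ds)) z = LA p (\<Union>Ds) z" by (simp add: LA_cl LA_Un image_image)
      also have "\<dots> \<le> LA p (lub tensor2 Ds) z" by (rule LA_mono) (use lub_tensor2_upper in blast)
      finally show "LA p (\<Union>(clA p ` Ds)) z \<le> LA p (lub tensor2 Ds) z" .
    qed
    then show "clA p (lub tensor2 Ds) = lub (QA p) (clA p ` Ds)"
      unfolding lub_QA[OF sub] cl_eq_iff by (rule ext)
  qed (rule cl_car)
next
  fix x y show "clA p (etensor2 x y) = clA p {(x, y)}" by (rule cl_e2)
next
  show "clA p ` carrier tensor2 = carrier (QA p)"
  proof
    show "clA p ` carrier tensor2 \<subseteq> carrier (QA p)" by (auto simp: cl_car)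
    show "carrier (QA p) \<subseteq> clA p ` carrier tensor2"
    proof
      fix D assume "D \<in> carrier (QA p)"
      then have "D = clA p D" by (simp add: QA_carrier in_range_cl)
      moreover have "D \<in> carrier tensor2" using cl_bi \<open>D = clA p D\<close> by (metis carrier_tensor2 mem_Collect_eq)
      ultimately show "D \<in> clA p ` carrier tensor2" by blast
    qed
  qed
qed

end

context mp begin

lemma morita: "morita_context (QA p) (QA q) (LA p) (RA p) (LA q) (RA q) (\<lambda>x y. clA p {(x, y)}) (\<lambda>y x. clA q {(y, x)})"
  unfolding morita_context_def
  apply (intro conjI allI ballI)
  apply (rule QA_mreg sw.QA_mreg bimodX sw.bimodX cl_car sw.cl_car M2 M3 sw.M2 sw.M3 M6 M7 sw.M6 sw.M7
      M10 sw.M10 M12 sw.M12 M14 sw.M14 | assumption)+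
  done

end

lemma morita_sym:
  assumes "morita_context A B lX rX lY rY pr br"
  shows "morita_context B A lY rY lX rX br pr"
  using assms unfolding morita_context_def by (elim conjE) (intro conjI; assumption)

lemma dec:
  assumes sp: "sup_preserving tensor2 A f" and e: "\<forall>x y. f (etensor2 x y) = pr x y"
    and su: "f ` carrier tensor2 = carrier A" and a: "a \<in> carrier A"
  shows "\<exists>D. a = lub A ((\<lambda>w. pr (fst w) (snd w)) ` D)"
proof -
  obtain D where D: "D \<in> carrier tensor2" "a = f D" using a su by (metis imageE)
  then have BD: "bi_ideal D" by (simp add: carrier_tensor2)
  have sub: "(\<lambda>(a, b). etensor2 a b) ` D \<subseteq> carrier tensor2"
    by (auto simp: carrier_tensor2 bi_ideal_e2 split: prod.split)
  have "f D = f (lub tensor2 ((\<lambda>(a, b). etensor2 a b) ` D))" by (simp add: bi_decomp[OF BD])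
  also have "\<dots> = lub A (f ` (\<lambda>(a, b). etensor2 a b) ` D)"
    using sp sub unfolding sup_preserving_def by blast
  also have "\<dots> = lub A ((\<lambda>w. pr (fst w) (snd w)) ` D)"
    by (simp add: image_image case_prod_unfold e)
  finally show ?thesis using D by blast
qed

context
  fixes A :: "'a quantale" and B :: "'b quantale"
    and lX :: "'a \<Rightarrow> 'x::complete_lattice \<Rightarrow> 'x" and rX :: "'x \<Rightarrow> 'b \<Rightarrow> 'x"
    and lY :: "'b \<Rightarrow> 'y::complete_lattice \<Rightarrow> 'y" and rY :: "'y \<Rightarrow> 'a \<Rightarrow> 'y"
    and pr :: "'x \<Rightarrow> 'y \<Rightarrow> 'a" and br :: "'y \<Rightarrow> 'x \<Rightarrow> 'b"
  assumes mc: "morita_context A B lX rX lY rY pr br"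
begin

lemma mcX: "mregular_bimodule A B (tlat :: 'x slat) lX rX"
  by (rule mc[unfolded morita_context_def, THEN conjunct2, THEN conjunct2, THEN conjunct1])
lemma pr_car: "pr x y \<in> carrier A"
  using mc[unfolded morita_context_def, THEN conjunct2, THEN conjunct2, THEN conjunct2, THEN conjunct2, THEN conjunct1] by blast
lemma pr_Sup1: "pr (Sup S) y = lub A ((\<lambda>x. pr x y) ` S)"
  using mc[unfolded morita_context_def, THEN conjunct2, THEN conjunct2, THEN conjunct2, THEN conjunct2, THEN conjunct2, THEN conjunct2, THEN conjunct1] by blast
lemma pr_Sup2: "pr x (Sup T) = lub A (pr x ` T)"
  using mc[unfolded morita_context_def, THEN conjunct2, THEN conjunct2, THEN conjunct2, THEN conjunct2, THEN conjunct2, THEN conjunct2, THEN conjunct2, THEN conjunct1] by blast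
lemma M6': "a \<in> carrier A \<Longrightarrow> pr (lX a x) y = mult A a (pr x y)"
  using mc[unfolded morita_context_def, THEN conjunct2, THEN conjunct2, THEN conjunct2, THEN conjunct2, THEN conjunct2, THEN conjunct2, THEN conjunct2, THEN conjunct2, THEN conjunct2, THEN conjunct2, THEN conjunct1] by blast
lemma M10': "b \<in> carrier B \<Longrightarrow> pr (rX x b) y = pr x (lY b y)"
  using mc[unfolded morita_context_def, THEN conjunct2, THEN conjunct2, THEN conjunct2, THEN conjunct2, THEN conjunct2, THEN conjunct2, THEN conjunct2, THEN conjunct2, THEN conjunct2, THEN conjunct2, THEN conjunct2, THEN conjunct2, THEN conjunct2, THEN conjunct2, THEN conjunct1] by blast
lemma M12': "lX (pr x1 y) x2 = rX x1 (br y x2)"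
  using mc[unfolded morita_context_def, THEN conjunct2, THEN conjunct2, THEN conjunct2, THEN conjunct2, THEN conjunct2, THEN conjunct2, THEN conjunct2, THEN conjunct2, THEN conjunct2, THEN conjunct2, THEN conjunct2, THEN conjunct2, THEN conjunct2, THEN conjunct2, THEN conjunct2, THEN conjunct2, THEN conjunct1] by blast
lemma decA: "a \<in> carrier A \<Longrightarrow> \<exists>D. a = lub A ((\<lambda>w. pr (fst w) (snd w)) ` D)"
  using mc[unfolded morita_context_def, THEN conjunct2, THEN conjunct2, THEN conjunct2, THEN conjunct2, THEN conjunct2, THEN conjunct2, THEN conjunct2, THEN conjunct2, THEN conjunct2, THEN conjunct2, THEN conjunct2, THEN conjunct2, THEN conjunct2, THEN conjunct2, THEN conjunct2, THEN conjunct2, THEN conjunct2, THEN conjunct2, THEN conjunct1] by (elim exE conjE) (rule dec, assumption+)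
lemma decB: "b \<in> carrier B \<Longrightarrow> \<exists>D. b = lub B ((\<lambda>w. br (fst w) (snd w)) ` D)"
  using mc[unfolded morita_context_def, THEN conjunct2, THEN conjunct2, THEN conjunct2, THEN conjunct2, THEN conjunct2, THEN conjunct2, THEN conjunct2, THEN conjunct2, THEN conjunct2, THEN conjunct2, THEN conjunct2, THEN conjunct2, THEN conjunct2, THEN conjunct2, THEN conjunct2, THEN conjunct2, THEN conjunct2, THEN conjunct2, THEN conjunct2] by (elim exE conjE) (rule dec, assumption+)
lemma br_car: "br y x \<in> carrier B"
  using mc[unfolded morita_context_def, THEN conjunct2, THEN conjunct2, THEN conjunct2, THEN conjunct2, THEN conjunct2, THEN conjunct1] by blast

lemma lmX: "left_mregular A (tlat :: 'x slat) lX"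
  using mcX unfolding mregular_bimodule_def by (rule conjunct1)
lemma rmX: "right_mregular B (tlat :: 'x slat) rX"
  using mcX unfolding mregular_bimodule_def by (elim conjE)

lemma lX_lub: "S \<subseteq> carrier A \<Longrightarrow> lX (lub A S) m = Sup ((\<lambda>a. lX a m) ` S)"
  using lmX[unfolded left_mregular_def, THEN conjunct1, unfolded left_module_def, THEN conjunct2, THEN conjunct2, THEN conjunct2, THEN conjunct2, THEN conjunct2] by (simp add: lub_tlat)
lemma lX_Sup: "a \<in> carrier A \<Longrightarrow> lX a (Sup S) = Sup (lX a ` S)"
  using lmX[unfolded left_mregular_def, THEN conjunct1, unfolded left_module_def, THEN conjunct2, THEN conjunct2, THEN conjunct2, THEN conjunct2, THEN conjunct1] by (simp add: lub_tlat)
lemma lX_mult: "a \<in> carrier A \<Longrightarrow> b \<in> carrier A \<Longrightarrow> lX (mult A a b) m = lX a (lX b m)"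
  using lmX[unfolded left_mregular_def, THEN conjunct1, unfolded left_module_def, THEN conjunct2, THEN conjunct2, THEN conjunct2, THEN conjunct1] by simp
lemma sepL: "(\<forall>a\<in>carrier A. lX a m = lX a n) \<Longrightarrow> m = n"
  using lmX[unfolded left_mregular_def, THEN conjunct2, THEN conjunct2] by simp
lemma essL: "\<exists>S. S \<subseteq> {lX a n |a n. a \<in> carrier A} \<and> m = Sup S"
  using lmX[unfolded left_mregular_def, THEN conjunct2, THEN conjunct1] by (simp add: lub_tlat)
lemma rX_lub: "S \<subseteq> carrier B \<Longrightarrow> rX m (lub B S) = Sup (rX m ` S)"
  using rmX[unfolded right_mregular_def, THEN conjunct1, unfolded right_module_def, THEN conjunct2, THEN conjunct2, THEN conjunct2, THEN conjunct2, THEN conjunct2] by (simp add: lub_tlat)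
lemma sepR: "(\<forall>b\<in>carrier B. rX m b = rX n b) \<Longrightarrow> m = n"
  using rmX[unfolded right_mregular_def, THEN conjunct2, THEN conjunct2] by simp

lemma lX_dec: "a \<in> carrier A \<Longrightarrow> \<exists>D. \<forall>m. lX a m = (SUP w\<in>D. lX (pr (fst w) (snd w)) m)"
proof -
  assume "a \<in> carrier A"
  then obtain D where D: "a = lub A ((\<lambda>w. pr (fst w) (snd w)) ` D)" using decA by blast
  have sub: "(\<lambda>w. pr (fst w) (snd w)) ` D \<subseteq> carrier A" using pr_car by auto
  show ?thesis unfolding D lX_lub[OF sub] by (simp add: image_image) blast
qed

lemma rX_dec: "b \<in> carrier B \<Longrightarrow> \<exists>D. \<forall>m. rX m b = (SUP w\<in>D. rX m (br (fst w) (snd w)))"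
proof -
  assume "b \<in> carrier B"
  then obtain D where D: "b = lub B ((\<lambda>w. br (fst w) (snd w)) ` D)" using decB by blast
  have sub: "(\<lambda>w. br (fst w) (snd w)) ` D \<subseteq> carrier B" using br_car by auto
  show ?thesis unfolding D rX_lub[OF sub] by (simp add: image_image) blast
qed

lemma tX: "trilin (\<lambda>a b c. lX (pr a b) c)"
  unfolding trilin_def
proof (intro conjI allI)
  fix S b c
  have sub: "(\<lambda>x. pr x b) ` S \<subseteq> carrier A" using pr_car by auto
  show "lX (pr (Sup S) b) c = (SUP a\<in>S. lX (pr a b) c)"
    unfolding pr_Sup1 lX_lub[OF sub] by (simp add: image_image)
next
  fix a T c
  have sub: "pr a ` T \<subseteq> carrier A" using pr_car by auto
  show "lX (pr a (Sup T)) c = (SUP b\<in>T. lX (pr a b) c)"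
    unfolding pr_Sup2 lX_lub[OF sub] by (simp add: image_image)
next
  fix a b U
  show "lX (pr a b) (Sup U) = (SUP c\<in>U. lX (pr a b) c)"
    by (simp add: lX_Sup pr_car)
qed

lemma genX: "\<exists>T. x = (SUP (a, b, c)\<in>T. lX (pr a b) c)"
proof -
  obtain S where S: "S \<subseteq> {lX a n |a n. a \<in> carrier A}" "x = Sup S" using essL by blast
  have "\<forall>a\<in>carrier A. \<exists>D. \<forall>m. lX a m = (SUP w\<in>D. lX (pr (fst w) (snd w)) m)" using lX_dec by blast
  then obtain Df where Df: "\<And>a m. a \<in> carrier A \<Longrightarrow> lX a m = (SUP w\<in>Df a. lX (pr (fst w) (snd w)) m)"
    by metis
  define T where "T = {(u, v, n) |u v n a. a \<in> carrier A \<and> lX a n \<in> S \<and> (u, v) \<in> Df a}"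
  have "x = (SUP (a, b, c)\<in>T. lX (pr a b) c)"
  proof (rule antisym)
    show "x \<le> (SUP (a, b, c)\<in>T. lX (pr a b) c)"
      unfolding S(2)
    proof (rule Sup_least)
      fix s assume "s \<in> S"
      then obtain a n where an: "a \<in> carrier A" "s = lX a n" using S(1) by blast
      show "s \<le> (SUP (a, b, c)\<in>T. lX (pr a b) c)"
        unfolding an(2) Df[OF an(1)]
      proof (rule SUP_least)
        fix w assume "w \<in> Df a"
        then have "(fst w, snd w, n) \<in> T" unfolding T_def using an \<open>s \<in> S\<close> by auto
        then show "lX (pr (fst w) (snd w)) n \<le> (SUP (a, b, c)\<in>T. lX (pr a b) c)"
          by (rule SUP_upper2) simp
      qed
    qed
    show "(SUP (a, b, c)\<in>T. lX (pr a b) c) \<le> x"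
    proof (rule SUP_least)
      fix w assume "w \<in> T"
      then obtain u v n a where w: "w = (u, v, n)" "a \<in> carrier A" "lX a n \<in> S" "(u, v) \<in> Df a"
        unfolding T_def by blast
      have "lX (pr u v) n \<le> lX a n" unfolding Df[OF w(2), of n]
        by (rule SUP_upper2[OF w(4)]) simp
      also have "\<dots> \<le> x" unfolding S(2) by (rule Sup_upper[OF w(3)])
      finally show "(case w of (a, b, c) \<Rightarrow> lX (pr a b) c) \<le> x" unfolding w(1) by simp
    qed
  qed
  then show ?thesis by blast
qed

lemma sepX1: "(\<forall>u v. lX (pr u v) x1 = lX (pr u v) x2) \<Longrightarrow> x1 = x2"
proof (rule sepL, intro ballI)
  fix a assume "\<forall>u v. lX (pr u v) x1 = lX (pr u v) x2" "a \<in> carrier A"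
  then show "lX a x1 = lX a x2" using lX_dec[of a] by auto
qed

lemma sepX2: "(\<forall>u v. lX (pr x1 v) u = lX (pr x2 v) u) \<Longrightarrow> x1 = x2"
proof (rule sepR, intro ballI)
  fix b assume "\<forall>u v. lX (pr x1 v) u = lX (pr x2 v) u" "b \<in> carrier B"
  then have "\<forall>u v. rX x1 (br v u) = rX x2 (br v u)" by (simp add: M12')
  then show "rX x1 b = rX x2 b" using rX_dec[OF \<open>b \<in> carrier B\<close>] by auto
qed

lemma cX1: "lX (pr (lX (pr x1 y1) x2) y2) x3 = lX (pr x1 y1) (lX (pr x2 y2) x3)"
  by (simp add: M6' pr_car lX_mult)

lemma cX2: "lX (pr x1 (lY (br y1 x2) y2)) x3 = lX (pr (lX (pr x1 y1) x2) y2) x3"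
  by (simp add: M10'[symmetric] br_car M12')

end

theorem theorem1:
  shows "(\<exists>(A :: ('x::complete_lattice \<times> 'y::complete_lattice) set quantale) (B :: ('y \<times> 'x) set quantale)
            (lX :: ('x \<times> 'y) set \<Rightarrow> 'x \<Rightarrow> 'x) (rX :: 'x \<Rightarrow> ('y \<times> 'x) set \<Rightarrow> 'x)
            (lY :: ('y \<times> 'x) set \<Rightarrow> 'y \<Rightarrow> 'y) (rY :: 'y \<Rightarrow> ('x \<times> 'y) set \<Rightarrow> 'y)
            pr br. morita_context A B lX rX lY rY pr br)
    \<longleftrightarrow>
    (\<exists>(p :: ('x \<times> 'y \<times> 'x) set \<Rightarrow> 'x) (q :: ('y \<times> 'x \<times> 'y) set \<Rightarrow> 'y).
       sup_preserving (tensor3 :: ('x \<times> 'y \<times> 'x) set slat) (tlat :: 'x slat) p \<and>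
       p ` carrier (tensor3 :: ('x \<times> 'y \<times> 'x) set slat) = UNIV \<and>
       sup_preserving (tensor3 :: ('y \<times> 'x \<times> 'y) set slat) (tlat :: 'y slat) q \<and>
       q ` carrier (tensor3 :: ('y \<times> 'x \<times> 'y) set slat) = UNIV \<and>
       (\<forall>x1 x2 x3 y1 y2.
          p (etensor3 (p (etensor3 x1 y1 x2)) y2 x3) = p (etensor3 x1 (q (etensor3 y1 x2 y2)) x3) \<and>
          p (etensor3 x1 (q (etensor3 y1 x2 y2)) x3) = p (etensor3 x1 y1 (p (etensor3 x2 y2 x3)))) \<and>
       (\<forall>y1 y2 y3 x1 x2.
          q (etensor3 (q (etensor3 y1 x1 y2)) x2 y3) = q (etensor3 y1 (p (etensor3 x1 y2 x2)) y3) \<and>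
          q (etensor3 y1 (p (etensor3 x1 y2 x2)) y3) = q (etensor3 y1 x1 (q (etensor3 y2 x2 y3)))) \<and>
       (\<forall>x1 x2. (\<forall>u v. p (etensor3 u v x1) = p (etensor3 u v x2)) \<longrightarrow> x1 = x2) \<and>
       (\<forall>x1 x2. (\<forall>u v. p (etensor3 x1 v u) = p (etensor3 x2 v u)) \<longrightarrow> x1 = x2) \<and>
       (\<forall>y1 y2. (\<forall>v u. q (etensor3 v u y1) = q (etensor3 v u y2)) \<longrightarrow> y1 = y2) \<and>
       (\<forall>y1 y2. (\<forall>u v. q (etensor3 y1 u v) = q (etensor3 y2 u v)) \<longrightarrow> y1 = y2))"
proof
  assume "\<exists>(A :: ('x::complete_lattice \<times> 'y::complete_lattice) set quantale) (B :: ('y \<times> 'x) set quantale)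
            (lX :: ('x \<times> 'y) set \<Rightarrow> 'x \<Rightarrow> 'x) (rX :: 'x \<Rightarrow> ('y \<times> 'x) set \<Rightarrow> 'x)
            (lY :: ('y \<times> 'x) set \<Rightarrow> 'y \<Rightarrow> 'y) (rY :: 'y \<Rightarrow> ('x \<times> 'y) set \<Rightarrow> 'y)
            pr br. morita_context A B lX rX lY rY pr br"
  then obtain A :: "('x \<times> 'y) set quantale" and B :: "('y \<times> 'x) set quantale"
    and lX :: "('x \<times> 'y) set \<Rightarrow> 'x \<Rightarrow> 'x" and rX :: "'x \<Rightarrow> ('y \<times> 'x) set \<Rightarrow> 'x"
    and lY :: "('y \<times> 'x) set \<Rightarrow> 'y \<Rightarrow> 'y" and rY :: "'y \<Rightarrow> ('x \<times> 'y) set \<Rightarrow> 'y"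
    and pr br where mc: "morita_context A B lX rX lY rY pr br" by blast
  note mc' = morita_sym[OF mc]
  note e1 = PM_e3[OF tX[OF mc]] and e2 = PM_e3[OF tX[OF mc']]
  show "\<exists>(p :: ('x \<times> 'y \<times> 'x) set \<Rightarrow> 'x) (q :: ('y \<times> 'x \<times> 'y) set \<Rightarrow> 'y).
       sup_preserving (tensor3 :: ('x \<times> 'y \<times> 'x) set slat) (tlat :: 'x slat) p \<and>
       p ` carrier (tensor3 :: ('x \<times> 'y \<times> 'x) set slat) = UNIV \<and>
       sup_preserving (tensor3 :: ('y \<times> 'x \<times> 'y) set slat) (tlat :: 'y slat) q \<and>
       q ` carrier (tensor3 :: ('y \<times> 'x \<times> 'y) set slat) = UNIV \<and>
       (\<forall>x1 x2 x3 y1 y2.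
          p (etensor3 (p (etensor3 x1 y1 x2)) y2 x3) = p (etensor3 x1 (q (etensor3 y1 x2 y2)) x3) \<and>
          p (etensor3 x1 (q (etensor3 y1 x2 y2)) x3) = p (etensor3 x1 y1 (p (etensor3 x2 y2 x3)))) \<and>
       (\<forall>y1 y2 y3 x1 x2.
          q (etensor3 (q (etensor3 y1 x1 y2)) x2 y3) = q (etensor3 y1 (p (etensor3 x1 y2 x2)) y3) \<and>
          q (etensor3 y1 (p (etensor3 x1 y2 x2)) y3) = q (etensor3 y1 x1 (q (etensor3 y2 x2 y3)))) \<and>
       (\<forall>x1 x2. (\<forall>u v. p (etensor3 u v x1) = p (etensor3 u v x2)) \<longrightarrow> x1 = x2) \<and>
       (\<forall>x1 x2. (\<forall>u v. p (etensor3 x1 v u) = p (etensor3 x2 v u)) \<longrightarrow> x1 = x2) \<and>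
       (\<forall>y1 y2. (\<forall>v u. q (etensor3 v u y1) = q (etensor3 v u y2)) \<longrightarrow> y1 = y2) \<and>
       (\<forall>y1 y2. (\<forall>u v. q (etensor3 y1 u v) = q (etensor3 y2 u v)) \<longrightarrow> y1 = y2)"
  proof (intro exI[of _ "PM (\<lambda>a b c. lX (pr a b) c)"] exI[of _ "PM (\<lambda>a b c. lY (br a b) c)"] conjI allI impI)
    show "sup_preserving tensor3 tlat (PM (\<lambda>a b c. lX (pr a b) c))" by (rule PM_sp[OF tX[OF mc]])
    show "PM (\<lambda>a b c. lX (pr a b) c) ` carrier tensor3 = UNIV" by (rule PM_surj[OF tX[OF mc] genX[OF mc]])
    show "sup_preserving tensor3 tlat (PM (\<lambda>a b c. lY (br a b) c))" by (rule PM_sp[OF tX[OF mc']])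
    show "PM (\<lambda>a b c. lY (br a b) c) ` carrier tensor3 = UNIV" by (rule PM_surj[OF tX[OF mc'] genX[OF mc']])
  next
    fix x1 x2 x3 y1 y2
    show "PM (\<lambda>a b c. lX (pr a b) c) (etensor3 (PM (\<lambda>a b c. lX (pr a b) c) (etensor3 x1 y1 x2)) y2 x3) =
          PM (\<lambda>a b c. lX (pr a b) c) (etensor3 x1 (PM (\<lambda>a b c. lY (br a b) c) (etensor3 y1 x2 y2)) x3)"
      by (simp add: e1 e2 cX2[OF mc])
    show "PM (\<lambda>a b c. lX (pr a b) c) (etensor3 x1 (PM (\<lambda>a b c. lY (br a b) c) (etensor3 y1 x2 y2)) x3) =
          PM (\<lambda>a b c. lX (pr a b) c) (etensor3 x1 y1 (PM (\<lambda>a b c. lX (pr a b) c) (etensor3 x2 y2 x3)))"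
      by (simp add: e1 e2 cX2[OF mc] cX1[OF mc])
  next
    fix y1 y2 y3 x1 x2
    show "PM (\<lambda>a b c. lY (br a b) c) (etensor3 (PM (\<lambda>a b c. lY (br a b) c) (etensor3 y1 x1 y2)) x2 y3) =
          PM (\<lambda>a b c. lY (br a b) c) (etensor3 y1 (PM (\<lambda>a b c. lX (pr a b) c) (etensor3 x1 y2 x2)) y3)"
      by (simp add: e1 e2 cX2[OF mc'])
    show "PM (\<lambda>a b c. lY (br a b) c) (etensor3 y1 (PM (\<lambda>a b c. lX (pr a b) c) (etensor3 x1 y2 x2)) y3) =
          PM (\<lambda>a b c. lY (br a b) c) (etensor3 y1 x1 (PM (\<lambda>a b c. lY (br a b) c) (etensor3 y2 x2 y3)))"
      by (simp add: e1 e2 cX2[OF mc'] cX1[OF mc'])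
  next
    fix x1 x2 :: 'x
    assume "\<forall>u v. PM (\<lambda>a b c. lX (pr a b) c) (etensor3 u v x1) = PM (\<lambda>a b c. lX (pr a b) c) (etensor3 u v x2)"
    then show "x1 = x2" by (intro sepX1[OF mc]) (simp add: e1)
  next
    fix x1 x2 :: 'x
    assume "\<forall>u v. PM (\<lambda>a b c. lX (pr a b) c) (etensor3 x1 v u) = PM (\<lambda>a b c. lX (pr a b) c) (etensor3 x2 v u)"
    then show "x1 = x2" by (intro sepX2[OF mc]) (simp add: e1)
  next
    fix y1 y2 :: 'y
    assume "\<forall>v u. PM (\<lambda>a b c. lY (br a b) c) (etensor3 v u y1) = PM (\<lambda>a b c. lY (br a b) c) (etensor3 v u y2)"
    then show "y1 = y2" by (intro sepX1[OF mc']) (simp add: e2)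
  next
    fix y1 y2 :: 'y
    assume "\<forall>u v. PM (\<lambda>a b c. lY (br a b) c) (etensor3 y1 u v) = PM (\<lambda>a b c. lY (br a b) c) (etensor3 y2 u v)"
    then show "y1 = y2" by (intro sepX2[OF mc']) (simp add: e2)
  qed
next
  assume "\<exists>(p :: ('x \<times> 'y \<times> 'x) set \<Rightarrow> 'x) (q :: ('y \<times> 'x \<times> 'y) set \<Rightarrow> 'y).
       sup_preserving (tensor3 :: ('x \<times> 'y \<times> 'x) set slat) (tlat :: 'x slat) p \<and>
       p ` carrier (tensor3 :: ('x \<times> 'y \<times> 'x) set slat) = UNIV \<and>
       sup_preserving (tensor3 :: ('y \<times> 'x \<times> 'y) set slat) (tlat :: 'y slat) q \<and>
       q ` carrier (tensor3 :: ('y \<times> 'x \<times> 'y) set slat) = UNIV \<and>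
       (\<forall>x1 x2 x3 y1 y2.
          p (etensor3 (p (etensor3 x1 y1 x2)) y2 x3) = p (etensor3 x1 (q (etensor3 y1 x2 y2)) x3) \<and>
          p (etensor3 x1 (q (etensor3 y1 x2 y2)) x3) = p (etensor3 x1 y1 (p (etensor3 x2 y2 x3)))) \<and>
       (\<forall>y1 y2 y3 x1 x2.
          q (etensor3 (q (etensor3 y1 x1 y2)) x2 y3) = q (etensor3 y1 (p (etensor3 x1 y2 x2)) y3) \<and>
          q (etensor3 y1 (p (etensor3 x1 y2 x2)) y3) = q (etensor3 y1 x1 (q (etensor3 y2 x2 y3)))) \<and>
       (\<forall>x1 x2. (\<forall>u v. p (etensor3 u v x1) = p (etensor3 u v x2)) \<longrightarrow> x1 = x2) \<and>
       (\<forall>x1 x2. (\<forall>u v. p (etensor3 x1 v u) = p (etensor3 x2 v u)) \<longrightarrow> x1 = x2) \<and>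
       (\<forall>y1 y2. (\<forall>v u. q (etensor3 v u y1) = q (etensor3 v u y2)) \<longrightarrow> y1 = y2) \<and>
       (\<forall>y1 y2. (\<forall>u v. q (etensor3 y1 u v) = q (etensor3 y2 u v)) \<longrightarrow> y1 = y2)"
  then obtain p :: "('x \<times> 'y \<times> 'x) set \<Rightarrow> 'x" and q :: "('y \<times> 'x \<times> 'y) set \<Rightarrow> 'y" where
    h1: "sup_preserving tensor3 tlat p" and h2: "p ` carrier tensor3 = UNIV" and
    h3: "sup_preserving tensor3 tlat q" and h4: "q ` carrier tensor3 = UNIV" and
    h5: "\<forall>x1 x2 x3 y1 y2.
          p (etensor3 (p (etensor3 x1 y1 x2)) y2 x3) = p (etensor3 x1 (q (etensor3 y1 x2 y2)) x3) \<and>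
          p (etensor3 x1 (q (etensor3 y1 x2 y2)) x3) = p (etensor3 x1 y1 (p (etensor3 x2 y2 x3)))" and
    h6: "\<forall>y1 y2 y3 x1 x2.
          q (etensor3 (q (etensor3 y1 x1 y2)) x2 y3) = q (etensor3 y1 (p (etensor3 x1 y2 x2)) y3) \<and>
          q (etensor3 y1 (p (etensor3 x1 y2 x2)) y3) = q (etensor3 y1 x1 (q (etensor3 y2 x2 y3)))" and
    h7: "\<forall>x1 x2. (\<forall>u v. p (etensor3 u v x1) = p (etensor3 u v x2)) \<longrightarrow> x1 = x2" and
    h8: "\<forall>x1 x2. (\<forall>u v. p (etensor3 x1 v u) = p (etensor3 x2 v u)) \<longrightarrow> x1 = x2" and
    h9: "\<forall>y1 y2. (\<forall>v u. q (etensor3 v u y1) = q (etensor3 v u y2)) \<longrightarrow> y1 = y2" and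
    h10: "\<forall>y1 y2. (\<forall>u v. q (etensor3 y1 u v) = q (etensor3 y2 u v)) \<longrightarrow> y1 = y2"
    by (elim exE conjE) (rule that; assumption)
  have "mp p q"
  proof (unfold_locales)
    show "sup_preserving tensor3 tlat p" by (rule h1)
    show "p ` carrier tensor3 = UNIV" by (rule h2)
    show "sup_preserving tensor3 tlat q" by (rule h3)
    show "q ` carrier tensor3 = UNIV" by (rule h4)
  next
    fix x1 y1 x2 y2 x3
    show "p (etensor3 (p (etensor3 x1 y1 x2)) y2 x3) = p (etensor3 x1 (q (etensor3 y1 x2 y2)) x3)"
      using h5 by blast
    show "p (etensor3 x1 (q (etensor3 y1 x2 y2)) x3) = p (etensor3 x1 y1 (p (etensor3 x2 y2 x3)))"
      using h5 by blast
  next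
    fix y1 x1 y2 x2 y3
    show "q (etensor3 (q (etensor3 y1 x1 y2)) x2 y3) = q (etensor3 y1 (p (etensor3 x1 y2 x2)) y3)"
      using h6 by blast
    show "q (etensor3 y1 (p (etensor3 x1 y2 x2)) y3) = q (etensor3 y1 x1 (q (etensor3 y2 x2 y3)))"
      using h6 by blast
  next
    fix x1 x2 assume "\<And>u v. p (etensor3 u v x1) = p (etensor3 u v x2)"
    then show "x1 = x2" using h7 by blast
  next
    fix x1 x2 assume "\<And>u v. p (etensor3 x1 v u) = p (etensor3 x2 v u)"
    then show "x1 = x2" using h8 by blast
  next
    fix y1 y2 assume "\<And>v u. q (etensor3 v u y1) = q (etensor3 v u y2)"
    then show "y1 = y2" using h9 by blast
  next
    fix y1 y2 assume "\<And>u v. q (etensor3 y1 u v) = q (etensor3 y2 u v)"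
    then show "y1 = y2" using h10 by blast
  qed
  then show "\<exists>(A :: ('x::complete_lattice \<times> 'y::complete_lattice) set quantale) (B :: ('y \<times> 'x) set quantale)
            (lX :: ('x \<times> 'y) set \<Rightarrow> 'x \<Rightarrow> 'x) (rX :: 'x \<Rightarrow> ('y \<times> 'x) set \<Rightarrow> 'x)
            (lY :: ('y \<times> 'x) set \<Rightarrow> 'y \<Rightarrow> 'y) (rY :: 'y \<Rightarrow> ('x \<times> 'y) set \<Rightarrow> 'y)
            pr br. morita_context A B lX rX lY rY pr br"
    by (blast intro: mp.morita)
qed

end
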